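(* Consider the dynamical system, trajectory space $\mathcal{S}$, charts $\Phi_t$ and models $\mathfrak{p}_t$ described in the context, with $f(\cdot,u_t)$ a diffeomorphism of $\mathbb{R}^{\dim(s)}$ for every $t$. Fix an initial state $s_0$, inputs $(u_t)_{t\ge1}$ and observations $(y_t)_{t\ge1}$. Let $s_t$ be the state estimated at time $t$ by the pure fading-memory extended Kalman filter with weights $(\alpha_t)$, observations $(y_t)$, initial state $s_0$ and initial covariance $P_0$ (symmetric positive definite). Let $\mathbf{s}^t\in\mathcal{S}$ be the trajectory estimated after $t$ steps of the online natural gradient in charts for the models $\mathfrak{p}_t$ in the charts $\Phi_t$, initialized at the trajectory $\mathbf{s}^0$ with $\mathbf{s}^0_0=s_0$, and with initial metric whose matrix in chart $\Phi_0$ is $J_0$ (symmetric positive definite). Assume the hyperparameters are related by $$P_0=\eta_0 J_0^{-1},\qquad \gamma_t=\eta_t,\qquad \frac1{\eta_t}=\frac{1}{1+\alpha_t}\,\frac1{\eta_{t-1}}+1\quad (t\ge1).$$ Then for all $t\ge0$, $\Phi_t(\mathbf{s}^t)=\mathbf{s}^t_t=s_t$, and $P_t=\eta_t J_t^{-1}$, where $J_t$ is the matrix of the metric tensor $\mathcal{J}_t$ in the chart $\Phi_t$.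
   Context: Conventions: for $y=f(x)$, $\partial y/\partial x$ is the Jacobian with $(i,j)$ entry $\partial f_i/\partial x_j$; gradients of real functions are row vectors; for a column vector $v$, $v^{\otimes2}=vv^\top$, and for a row vector $v$, $v^{\otimes 2}=v^\top v$. Exponential family: $p_{\mathrm{obs}}(y\mid\hat y)$ denotes a family of densities $\frac{1}{Z(\beta)}\exp(\sum_k\beta_kT_k(y))\lambda(dy)$ (reference measure $\lambda$, linearly independent sufficient statistics $T=(T_1,\dots,T_K)$, also independent from constants), parameterized by its mean parameter $\hat y=\mathbb{E}[T(y)]\in\mathbb{R}^K$ (e.g. $\mathcal N(\hat y,R)$ with fixed $R$). Dynamical system: states $s_t\in\mathbb{R}^{\dim(s)}$, inputs $u_t$, smooth $f$ with $s_t=f(s_{t-1},u_t)$; smooth $h$ with predictions $\hat y_t=h(s_t,u_t)$; observations $y_t\sim p_{\mathrm{obs}}(y\mid\hat y_t)$. $\mathcal S$ is the set of sequences $\mathbf{s}=(s_t)_{t\ge0}$ with $s_t=f(s_{t-1},u_t)$ for all $t\ge1$; $\Phi_t:\mathcal S\to\mathbb{R}^{\dim(s)}$, $\Phi_t(\mathbf{s})=s_t$ (a chart on the manifold $\mathcal S$); $\mathfrak{p}_t(y\mid\mathbf{s}):=p_{\mathrm{obs}}(y\mid h(\Phi_t(\mathbf{s}),u_t))$. Online natural gradient in charts: on a smooth manifold $\Theta$ with models $\mathfrak p_t(y\mid\vartheta)$ and charts $\Phi_t:\Theta\to\mathbb{R}^{\dim\Theta}$ (for a tensor $g$, $\mathbf{T}\Phi(g)$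 is its coordinate expression in chart $\Phi$, and $\mathbf T_\vartheta\Phi^{-1}$ the inverse operation at $\vartheta$), the algorithm maintains $\vartheta_t\in\Theta$ and a $(0,2)$-tensor $\mathcal J_t$ at $\vartheta_t$, updated for $t\ge1$ with learning rate $\eta_t$ and decay rate $\gamma_t$ by: $\theta\leftarrow\Phi_t(\vartheta_{t-1})$, $J\leftarrow\mathbf T\Phi_t(\mathcal J_{t-1})$; $J_t\leftarrow(1-\gamma_t)J+\gamma_t\mathbf T\Phi_t\big(\mathbb E_{y\sim\mathfrak p_t(\cdot\mid\vartheta_{t-1})}[(\partial\ln\mathfrak p_t(y\mid\vartheta)/\partial\vartheta|_{\vartheta_{t-1}})^{\otimes2}]\big)$; $\theta_t\leftarrow\theta+\eta_tJ_t^{-1}\mathbf T\Phi_t(\partial\ln\mathfrak p_t(y_t\mid\vartheta)/\partial\vartheta|_{\vartheta_{t-1}})^\top$; $\vartheta_t\leftarrow\Phi_t^{-1}(\theta_t)$, $\mathcal J_t\leftarrow\mathbf T_{\vartheta_t}\Phi_t^{-1}(J_t)$. Here $\vartheta_t=\mathbf s^t$. Extended Kalman filter (with exponential-family observations): maintains $s_t$ and covariance $P_t$, starting from $(s_0,P_0)$; for $t\ge1$: $s_{t|t-1}=f(s_{t-1},u_t)$, $F_{t-1}=\partial f/\partial s|_{(s_{t-1},u_t)}$, $P_{t|t-1}=F_{t-1}P_{t-1}F_{t-1}^\top+Q_t$, $\hat y_t=h(s_{t|t-1},u_t)$, $E_t=T(y_t)-\hat y_t$, $R_t=\mathrm{Cov}_{y\sim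 p_{\mathrm{obs}}(\cdot\mid\hat y_t)}(T(y))$, $H_t=\partial h/\partial s|_{(s_{t|t-1},u_t)}$, $K_t=P_{t|t-1}H_t^\top(H_tP_{t|t-1}H_t^\top+R_t)^{-1}$, $P_t=(\mathrm{Id}-K_tH_t)P_{t|t-1}$, $s_t=s_{t|t-1}+K_tE_t$. The pure fading-memory filter with weights $\alpha_t\ge0$ takes $Q_t=\alpha_tF_{t-1}P_{t-1}F_{t-1}^\top$, i.e. $P_{t|t-1}=(1+\alpha_t)F_{t-1}P_{t-1}F_{t-1}^\top$. *)

theory Defs
  imports "HOL-Analysis.Analysis"
begin

fun iter_dd :: "('a::real_normed_vector \<Rightarrow> 'b::real_normed_vector) \<Rightarrow> 'a list \<Rightarrow> 'a \<Rightarrow> 'b" where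
  "iter_dd g [] = g"
| "iter_dd g (v # vs) = (\<lambda>x. frechet_derivative (iter_dd g vs) (at x) v)"

definition smooth_map :: "('a::euclidean_space \<Rightarrow> 'b::real_normed_vector) \<Rightarrow> bool" where
  "smooth_map g \<longleftrightarrow> (\<forall>vs x. iter_dd g vs differentiable (at x))"

definition diffeo :: "('a::euclidean_space \<Rightarrow> 'a) \<Rightarrow> bool" where
  "diffeo g \<longleftrightarrow> bij g \<and> smooth_map g \<and> smooth_map (inv g)"

text \<open>Jacobian matrix, (i,j) entry = d g_i / d x_j.\<close>
definition jac :: "(real^'n \<Rightarrow> real^'m) \<Rightarrow> real^'n \<Rightarrow> real^'n^'m" where
  "jac g x = matrix (frechet_derivative g (at x))"

definition sym_pos_def :: "real^'n^'n \<Rightarrow> bool" where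
  "sym_pos_def M \<longleftrightarrow> transpose M = M \<and> (\<forall>x. x \<noteq> 0 \<longrightarrow> x \<bullet> (M *v x) > 0)"

text \<open>Reference measure lam on the observation space, sufficient statistics T.\<close>

definition expfam_stats :: "'y measure \<Rightarrow> ('y \<Rightarrow> real^'k) \<Rightarrow> bool" where
  "expfam_stats lam T \<longleftrightarrow> T \<in> borel_measurable lam \<and>
     (\<forall>(c::real^'k) (d::real). (AE y in lam. c \<bullet> T y = d) \<longrightarrow> c = 0 \<and> d = 0)"

definition nat_space :: "'y measure \<Rightarrow> ('y \<Rightarrow> real^'k) \<Rightarrow> (real^'k) set" where
  "nat_space lam T = {\<beta>. integrable lam (\<lambda>y. exp (\<beta> \<bullet> T y))}"

definition Zf :: "'y measure \<Rightarrow> ('y \<Rightarrow> real^'k) \<Rightarrow> real^'k \<Rightarrow> real" where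
  "Zf lam T \<beta> = (\<integral>y. exp (\<beta> \<bullet> T y) \<partial>lam)"

definition dens :: "'y measure \<Rightarrow> ('y \<Rightarrow> real^'k) \<Rightarrow> real^'k \<Rightarrow> 'y \<Rightarrow> real" where
  "dens lam T \<beta> y = exp (\<beta> \<bullet> T y) / Zf lam T \<beta>"

definition meanT :: "'y measure \<Rightarrow> ('y \<Rightarrow> real^'k) \<Rightarrow> real^'k \<Rightarrow> real^'k" where
  "meanT lam T \<beta> = (\<integral>y. dens lam T \<beta> y *\<^sub>R T y \<partial>lam)"

definition mean_dom :: "'y measure \<Rightarrow> ('y \<Rightarrow> real^'k) \<Rightarrow> (real^'k) set" where
  "mean_dom lam T = meanT lam T ` interior (nat_space lam T)"

definition natpar :: "'y measure \<Rightarrow> ('y \<Rightarrow> real^'k) \<Rightarrow> real^'k \<Rightarrow> real^'k" where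
  "natpar lam T yh = (THE \<beta>. \<beta> \<in> interior (nat_space lam T) \<and> meanT lam T \<beta> = yh)"

definition pobs :: "'y measure \<Rightarrow> ('y \<Rightarrow> real^'k) \<Rightarrow> real^'k \<Rightarrow> 'y \<Rightarrow> real" where
  "pobs lam T yh y = dens lam T (natpar lam T yh) y"

definition covT :: "'y measure \<Rightarrow> ('y \<Rightarrow> real^'k) \<Rightarrow> real^'k \<Rightarrow> real^'k^'k" where
  "covT lam T yh = (\<chi> i j. \<integral>y. (T y $ i - yh $ i) * (T y $ j - yh $ j) * pobs lam T yh y \<partial>lam)"

fun ekf :: "(real^'n \<Rightarrow> 'u \<Rightarrow> real^'n) \<Rightarrow> (real^'n \<Rightarrow> 'u \<Rightarrow> real^'k) \<Rightarrow> (nat \<Rightarrow> 'u)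
    \<Rightarrow> 'y measure \<Rightarrow> ('y \<Rightarrow> real^'k) \<Rightarrow> (nat \<Rightarrow> 'y) \<Rightarrow> (nat \<Rightarrow> real)
    \<Rightarrow> real^'n \<Rightarrow> real^'n^'n \<Rightarrow> nat \<Rightarrow> (real^'n) \<times> (real^'n^'n)" where
  "ekf f h u lam T y \<alpha> s0 P0 0 = (s0, P0)"
| "ekf f h u lam T y \<alpha> s0 P0 (Suc t) =
    (let (s, P) = ekf f h u lam T y \<alpha> s0 P0 t;
         spred = f s (u (Suc t));
         F = jac (\<lambda>x. f x (u (Suc t))) s;
         Q = \<alpha> (Suc t) *\<^sub>R (F ** P ** transpose F);
         Ppred = F ** P ** transpose F + Q;
         yh = h spred (u (Suc t));
         E = T (y (Suc t)) - yh;
         R = covT lam T yh;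
         H = jac (\<lambda>x. h x (u (Suc t))) spred;
         K = Ppred ** transpose H ** matrix_inv (H ** Ppred ** transpose H + R);
         Pn = (mat 1 - K ** H) ** Ppred;
         sn = spred + K *v E
     in (sn, Pn))"

definition traj :: "(real^'n \<Rightarrow> 'u \<Rightarrow> real^'n) \<Rightarrow> (nat \<Rightarrow> 'u) \<Rightarrow> (nat \<Rightarrow> real^'n) set" where
  "traj f u = {ss. \<forall>t. ss (Suc t) = f (ss t) (u (Suc t))}"

definition Phi :: "nat \<Rightarrow> (nat \<Rightarrow> real^'n) \<Rightarrow> real^'n" where
  "Phi t ss = ss t"

definition Phi_inv :: "(real^'n \<Rightarrow> 'u \<Rightarrow> real^'n) \<Rightarrow> (nat \<Rightarrow> 'u) \<Rightarrow> nat \<Rightarrow> real^'n \<Rightarrow> (nat \<Rightarrow> real^'n)" where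
  "Phi_inv f u t \<theta> = (THE ss. ss \<in> traj f u \<and> Phi t ss = \<theta>)"

text \<open>Tangent space of the trajectory manifold at a trajectory: linearized trajectories.\<close>
definition tangent :: "(real^'n \<Rightarrow> 'u \<Rightarrow> real^'n) \<Rightarrow> (nat \<Rightarrow> 'u) \<Rightarrow> (nat \<Rightarrow> real^'n) \<Rightarrow> (nat \<Rightarrow> real^'n) set" where
  "tangent f u ss = {v. \<forall>t. v (Suc t) = jac (\<lambda>x. f x (u (Suc t))) (ss t) *v v t}"

text \<open>(0,2)-tensors at a point are bilinear forms on tangent vectors; covectors are linear
  forms. Coordinate expressions in chart Phi_t and the inverse operation:\<close>

definition coord_tensor :: "(real^'n \<Rightarrow> 'u \<Rightarrow> real^'n) \<Rightarrow> (nat \<Rightarrow> 'u) \<Rightarrow> nat \<Rightarrow> (nat \<Rightarrow> real^'n)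
    \<Rightarrow> ((nat \<Rightarrow> real^'n) \<Rightarrow> (nat \<Rightarrow> real^'n) \<Rightarrow> real) \<Rightarrow> real^'n^'n" where
  "coord_tensor f u t ss g = (THE M. \<forall>v\<in>tangent f u ss. \<forall>w\<in>tangent f u ss. g v w = v t \<bullet> (M *v w t))"

definition coord_covec :: "(real^'n \<Rightarrow> 'u \<Rightarrow> real^'n) \<Rightarrow> (nat \<Rightarrow> 'u) \<Rightarrow> nat \<Rightarrow> (nat \<Rightarrow> real^'n)
    \<Rightarrow> ((nat \<Rightarrow> real^'n) \<Rightarrow> real) \<Rightarrow> real^'n" where
  "coord_covec f u t ss \<omega> = (THE c. \<forall>v\<in>tangent f u ss. \<omega> v = c \<bullet> v t)"

definition tensor_of_coord :: "nat \<Rightarrow> real^'n^'n \<Rightarrow> ((nat \<Rightarrow> real^'n) \<Rightarrow> (nat \<Rightarrow> real^'n) \<Rightarrow> real)" where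
  "tensor_of_coord t M = (\<lambda>v w. v t \<bullet> (M *v w t))"

definition frak_p :: "(real^'n \<Rightarrow> 'u \<Rightarrow> real^'k) \<Rightarrow> (nat \<Rightarrow> 'u) \<Rightarrow> 'y measure \<Rightarrow> ('y \<Rightarrow> real^'k)
    \<Rightarrow> nat \<Rightarrow> 'y \<Rightarrow> (nat \<Rightarrow> real^'n) \<Rightarrow> real" where
  "frak_p h u lam T t y ss = pobs lam T (h (Phi t ss) (u t)) y"

text \<open>Differential of s |-> ln p_t(y | s) at ss, applied to a tangent vector v
  (p_t depends on the trajectory only through the chart Phi_t).\<close>
definition score :: "(real^'n \<Rightarrow> 'u \<Rightarrow> real^'k) \<Rightarrow> (nat \<Rightarrow> 'u) \<Rightarrow> 'y measure \<Rightarrow> ('y \<Rightarrow> real^'k)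
    \<Rightarrow> nat \<Rightarrow> 'y \<Rightarrow> (nat \<Rightarrow> real^'n) \<Rightarrow> (nat \<Rightarrow> real^'n) \<Rightarrow> real" where
  "score h u lam T t y ss v =
     frechet_derivative (\<lambda>\<theta>. ln (pobs lam T (h \<theta> (u t)) y)) (at (Phi t ss)) (v t)"

definition fisher :: "(real^'n \<Rightarrow> 'u \<Rightarrow> real^'k) \<Rightarrow> (nat \<Rightarrow> 'u) \<Rightarrow> 'y measure \<Rightarrow> ('y \<Rightarrow> real^'k)
    \<Rightarrow> nat \<Rightarrow> (nat \<Rightarrow> real^'n) \<Rightarrow> (nat \<Rightarrow> real^'n) \<Rightarrow> (nat \<Rightarrow> real^'n) \<Rightarrow> real" where
  "fisher h u lam T t ss v w =
     (\<integral>y. score h u lam T t y ss v * score h u lam T t y ss w * frak_p h u lam T t y ss \<partial>lam)"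

fun ongd :: "(real^'n \<Rightarrow> 'u \<Rightarrow> real^'n) \<Rightarrow> (real^'n \<Rightarrow> 'u \<Rightarrow> real^'k) \<Rightarrow> (nat \<Rightarrow> 'u)
    \<Rightarrow> 'y measure \<Rightarrow> ('y \<Rightarrow> real^'k) \<Rightarrow> (nat \<Rightarrow> 'y) \<Rightarrow> (nat \<Rightarrow> real) \<Rightarrow> (nat \<Rightarrow> real)
    \<Rightarrow> (nat \<Rightarrow> real^'n) \<Rightarrow> real^'n^'n \<Rightarrow> nat
    \<Rightarrow> (nat \<Rightarrow> real^'n) \<times> ((nat \<Rightarrow> real^'n) \<Rightarrow> (nat \<Rightarrow> real^'n) \<Rightarrow> real)" where
  "ongd f h u lam T y \<eta> \<gamma> ss0 J0 0 = (ss0, tensor_of_coord 0 J0)"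
| "ongd f h u lam T y \<eta> \<gamma> ss0 J0 (Suc t) =
    (let (ss, G) = ongd f h u lam T y \<eta> \<gamma> ss0 J0 t;
         \<theta> = Phi (Suc t) ss;
         J = coord_tensor f u (Suc t) ss G;
         Jn = (1 - \<gamma> (Suc t)) *\<^sub>R J
              + \<gamma> (Suc t) *\<^sub>R coord_tensor f u (Suc t) ss (fisher h u lam T (Suc t) ss);
         g = coord_covec f u (Suc t) ss (score h u lam T (Suc t) (y (Suc t)) ss);
         \<theta>n = \<theta> + \<eta> (Suc t) *\<^sub>R (matrix_inv Jn *v g)
     in (Phi_inv f u (Suc t) \<theta>n, tensor_of_coord (Suc t) Jn))"

end

theory Submission
  imports Defs
begin


lemma smooth_diff: "smooth_map g \<Longrightarrow> g differentiable (at x)"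
  unfolding smooth_map_def by (metis iter_dd.simps(1))

lemma jac_deriv:
  assumes "g differentiable (at x)"
  shows "(g has_derivative (\<lambda>v. jac g x *v v)) (at x)"
proof -
  have d: "(g has_derivative frechet_derivative g (at x)) (at x)"
    using assms frechet_derivative_works by blast
  then have "bounded_linear (frechet_derivative g (at x))" by (rule has_derivative_bounded_linear)
  then have "(\<lambda>v. jac g x *v v) = frechet_derivative g (at x)" unfolding jac_def by simp
  then show ?thesis using d by simp
qed

lemma partial_diff:
  assumes "smooth_map (\<lambda>(s, v). h s v)"
  shows "(\<lambda>s. h s v) differentiable (at s)"
proof -
  have "(\<lambda>(s, v). h s v) differentiable (at (s, v))" using smooth_diff[OF assms] .
  moreover have "(\<lambda>s. (s, v)) differentiable (at s)"
    by (auto intro!: derivative_eq_intros simp: differentiable_def)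
  ultimately have "(\<lambda>s. (\<lambda>(s, v). h s v) (s, v)) differentiable (at s)"
    using differentiable_compose[of "\<lambda>(s, v). h s v" "\<lambda>s. (s, v)"] by auto
  then show ?thesis by simp
qed

lemma diffeo_jac_invertible:
  fixes g :: "real^'n \<Rightarrow> real^'n"
  assumes "diffeo g"
  shows "invertible (jac g x)"
proof -
  have bij: "bij g" and sg: "smooth_map g" and si: "smooth_map (inv g)" using assms unfolding diffeo_def by auto
  have dg: "(g has_derivative (\<lambda>v. jac g x *v v)) (at x)" by (rule jac_deriv[OF smooth_diff[OF sg]])
  have di: "(inv g has_derivative (\<lambda>v. jac (inv g) (g x) *v v)) (at (g x))" by (rule jac_deriv[OF smooth_diff[OF si]])
  have "((\<lambda>x. inv g (g x)) has_derivative (\<lambda>v. jac (inv g) (g x) *v (jac g x *v v))) (at x)"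
    by (rule has_derivative_compose[OF dg di])
  moreover have "(\<lambda>x. inv g (g x)) = (\<lambda>x. x)" using bij by (simp add: bij_is_inj)
  ultimately have "((\<lambda>x. x) has_derivative (\<lambda>v. jac (inv g) (g x) *v (jac g x *v v))) (at x)" by simp
  then have "(\<lambda>v. jac (inv g) (g x) *v (jac g x *v v)) = (\<lambda>v. v)"
    using has_derivative_unique[OF _ has_derivative_ident] by blast
  then have "inj ((*v) (jac g x))" by (metis injI)
  then show ?thesis by (metis invertible_left_inverse matrix_left_invertible_injective)
qed

lemma inv_props:
  assumes "invertible (A::real^'n^'n)"
  shows "A ** matrix_inv A = mat 1" "matrix_inv A ** A = mat 1"
proof -
  have "A ** matrix_inv A = mat 1 \<and> matrix_inv A ** A = mat 1"
    using assms unfolding matrix_inv_def invertible_def by (rule someI_ex)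
  then show "A ** matrix_inv A = mat 1" "matrix_inv A ** A = mat 1" by auto
qed

lemma inv_unique:
  fixes A X :: "real^'n^'n"
  assumes "X ** A = mat 1"
  shows "invertible A" "matrix_inv A = X"
proof -
  show i: "invertible A" using assms invertible_left_inverse by blast
  have "X = X ** (A ** matrix_inv A)" using inv_props[OF i] by simp
  also have "\<dots> = matrix_inv A" by (simp add: matrix_mul_assoc assms)
  finally show "matrix_inv A = X" by simp
qed

lemma bij_matrix: "invertible (A::real^'n^'n) \<Longrightarrow> bij ((*v) A)"
  unfolding bij_def
proof
  assume i: "invertible A"
  show "inj ((*v) A)" by (rule inj_matrix_vector_mult[OF i])
  show "surj ((*v) A)"
  proof (rule surjI)
    fix y show "A *v (matrix_inv A *v y) = y" using inv_props[OF i] by (simp add: matrix_vector_mul_assoc)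
  qed
qed

lemma seq_exists:
  fixes g :: "nat \<Rightarrow> 'a \<Rightarrow> 'a"
  assumes bij: "\<And>k. bij (g k)"
  shows "\<exists>x. (\<forall>k. x (Suc k) = g k (x k)) \<and> x m = a"
proof -
  define bk where "bk = rec_nat a (\<lambda>j z. inv (g (m - Suc j)) z)"
  have bk0: "bk 0 = a" and bkS: "bk (Suc j) = inv (g (m - Suc j)) (bk j)" for j unfolding bk_def by simp_all
  define fw where "fw = rec_nat a (\<lambda>j z. g (m + j) z)"
  have fw0: "fw 0 = a" and fwS: "fw (Suc j) = g (m + j) (fw j)" for j unfolding fw_def by simp_all
  define x where "x k = (if k \<le> m then bk (m - k) else fw (k - m))" for k
  have "x (Suc k) = g k (x k)" for k
  proof (cases "Suc k \<le> m")
    case True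
    then have e: "m - k = Suc (m - Suc k)" by simp
    have "x k = bk (m - k)" using True unfolding x_def by simp
    also have "\<dots> = inv (g k) (bk (m - Suc k))" unfolding e bkS using True by (simp add: Suc_diff_Suc)
    finally have "x k = inv (g k) (x (Suc k))" using True unfolding x_def by simp
    then show ?thesis using bij[of k] by (simp add: bij_inv_eq_iff)
  next
    case False
    then have km: "m \<le> k" by simp
    have xk: "x k = fw (k - m)"
      using km unfolding x_def by (cases "k = m") (simp_all add: bk0 fw0)
    have "x (Suc k) = fw (Suc (k - m))" using False unfolding x_def by (simp add: Suc_diff_le km)
    also have "\<dots> = g k (fw (k - m))" unfolding fwS using km by simp
    finally show ?thesis using xk by simp
  qed
  moreover have "x m = a" unfolding x_def by (simp add: bk0)
  ultimately show ?thesis by blast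
qed

lemma seq_unique:
  fixes g :: "nat \<Rightarrow> 'a \<Rightarrow> 'a"
  assumes inj: "\<And>k. inj (g k)"
    and x: "\<forall>k. x (Suc k) = g k (x k)" and y: "\<forall>k. y (Suc k) = g k (y k)" and m: "x m = y m"
  shows "x = y"
proof -
  have f: "x (m + j) = y (m + j)" for j by (induction j) (use m x y in auto)
  have b: "x (m - j) = y (m - j)" for j
  proof (induction j)
    case 0 then show ?case using m by simp
  next
    case (Suc j)
    show ?case
    proof (cases "j < m")
      case True
      then have e: "m - j = Suc (m - Suc j)" by simp
      have "g (m - Suc j) (x (m - Suc j)) = g (m - Suc j) (y (m - Suc j))"
        using Suc x y unfolding e by metis
      then show ?thesis using inj by (simp add: inj_eq)
    next
      case False
      then have "m - Suc j = m - j" by simp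
      then show ?thesis using Suc by simp
    qed
  qed
  show ?thesis
  proof
    fix k show "x k = y k"
    proof (cases "k \<le> m")
      case True then show ?thesis using b[of "m - k"] by simp
    next
      case False then show ?thesis using f[of "k - m"] by simp
    qed
  qed
qed


lemma f_bij:
  fixes f :: "real^'n \<Rightarrow> 'u \<Rightarrow> real^'n"
  assumes "\<forall>t\<ge>1. diffeo (\<lambda>s. f s (u t))"
  shows "bij (\<lambda>s. f s (u (Suc k)))"
  using assms unfolding diffeo_def by auto

lemma F_invertible:
  fixes f :: "real^'n \<Rightarrow> 'u \<Rightarrow> real^'n"
  assumes "\<forall>t\<ge>1. diffeo (\<lambda>s. f s (u t))"
  shows "invertible (jac (\<lambda>x. f x (u (Suc k))) z)"
  using assms by (intro diffeo_jac_invertible) auto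

lemma Phi_inv_props:
  fixes f :: "real^'n \<Rightarrow> 'u \<Rightarrow> real^'n"
  assumes df: "\<forall>t\<ge>1. diffeo (\<lambda>s. f s (u t))"
  shows "Phi_inv f u m \<theta> \<in> traj f u" "Phi m (Phi_inv f u m \<theta>) = \<theta>"
proof -
  have bij: "bij (\<lambda>s. f s (u (Suc k)))" for k using f_bij[of f u, OF df] .
  have inj: "inj (\<lambda>s. f s (u (Suc k)))" for k using bij bij_is_inj by blast
  obtain x where x: "\<forall>k. x (Suc k) = f (x k) (u (Suc k))" "x m = \<theta>"
    using seq_exists[of "\<lambda>k s. f s (u (Suc k))" m \<theta>] bij by auto
  have "\<exists>!ss. ss \<in> traj f u \<and> Phi m ss = \<theta>"
  proof (rule ex1I[of _ x])
    show "x \<in> traj f u \<and> Phi m x = \<theta>" using x by (simp add: traj_def Phi_def)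
    fix y assume "y \<in> traj f u \<and> Phi m y = \<theta>"
    then show "y = x" using seq_unique[of "\<lambda>k s. f s (u (Suc k))" y x m] inj x
      by (auto simp: traj_def Phi_def)
  qed
  then have "Phi_inv f u m \<theta> \<in> traj f u \<and> Phi m (Phi_inv f u m \<theta>) = \<theta>"
    unfolding Phi_inv_def by (rule theI')
  then show "Phi_inv f u m \<theta> \<in> traj f u" "Phi m (Phi_inv f u m \<theta>) = \<theta>" by auto
qed

lemma tangent_surj:
  fixes f :: "real^'n \<Rightarrow> 'u \<Rightarrow> real^'n"
  assumes df: "\<forall>t\<ge>1. diffeo (\<lambda>s. f s (u t))"
  shows "\<exists>v\<in>tangent f u ss. v m = a"
proof -
  have bij: "bij ((*v) (jac (\<lambda>x. f x (u (Suc k))) (ss k)))" for k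
    by (rule bij_matrix[OF F_invertible[of f u, OF df]])
  obtain x where x: "\<forall>k. x (Suc k) = jac (\<lambda>x. f x (u (Suc k))) (ss k) *v x k" "x m = a"
    using seq_exists[of "\<lambda>k v. jac (\<lambda>x. f x (u (Suc k))) (ss k) *v v" m a] bij by auto
  then show ?thesis unfolding tangent_def by auto
qed

lemma mat_eq_from_inner:
  fixes M M' :: "real^'n^'n"
  assumes "\<And>a b. a \<bullet> (M *v b) = a \<bullet> (M' *v b)"
  shows "M = M'"
proof -
  have e: "N $ i $ j = axis i 1 \<bullet> (N *v axis j 1)" for N :: "real^'n^'n" and i j
    by (simp add: inner_axis' matrix_vector_mul_component inner_axis)
  have "M $ i $ j = M' $ i $ j" for i j
    using assms[of "axis i 1" "axis j 1"] e[of M i j] e[of M' i j] by simp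
  then show ?thesis by (simp add: vec_eq_iff)
qed

lemma coord_tensor_eq:
  fixes f :: "real^'n \<Rightarrow> 'u \<Rightarrow> real^'n"
  assumes df: "\<forall>t\<ge>1. diffeo (\<lambda>s. f s (u t))"
    and g: "\<And>v w. v \<in> tangent f u ss \<Longrightarrow> w \<in> tangent f u ss \<Longrightarrow> g v w = v m \<bullet> (M *v w m)"
  shows "coord_tensor f u m ss g = M"
  unfolding coord_tensor_def
proof (rule the_equality)
  show "\<forall>v\<in>tangent f u ss. \<forall>w\<in>tangent f u ss. g v w = v m \<bullet> (M *v w m)" using g by blast
  fix M' assume M': "\<forall>v\<in>tangent f u ss. \<forall>w\<in>tangent f u ss. g v w = v m \<bullet> (M' *v w m)"
  show "M' = M"
  proof (rule mat_eq_from_inner)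
    fix a b :: "real^'n"
    obtain v where v: "v \<in> tangent f u ss" "v m = a" using tangent_surj[of f u, OF df] by blast
    obtain w where w: "w \<in> tangent f u ss" "w m = b" using tangent_surj[of f u, OF df] by blast
    show "a \<bullet> (M' *v b) = a \<bullet> (M *v b)" using M' g v w by metis
  qed
qed

lemma coord_covec_eq:
  fixes f :: "real^'n \<Rightarrow> 'u \<Rightarrow> real^'n"
  assumes df: "\<forall>t\<ge>1. diffeo (\<lambda>s. f s (u t))"
    and g: "\<And>v. v \<in> tangent f u ss \<Longrightarrow> \<omega> v = c \<bullet> v m"
  shows "coord_covec f u m ss \<omega> = c"
  unfolding coord_covec_def
proof (rule the_equality)
  show "\<forall>v\<in>tangent f u ss. \<omega> v = c \<bullet> v m" using g by blast
  fix c' assume c': "\<forall>v\<in>tangent f u ss. \<omega> v = c' \<bullet> v m"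
  have "c' \<bullet> a = c \<bullet> a" for a :: "real^'n"
  proof -
    obtain v where v: "v \<in> tangent f u ss" "v m = a" using tangent_surj[of f u, OF df] by blast
    then show ?thesis using c' g by metis
  qed
  then have "c' \<bullet> (c' - c) = c \<bullet> (c' - c)" by blast
  then have "(c' - c) \<bullet> (c' - c) = 0" by (simp add: inner_diff_left)
  then show "c' = c" by simp
qed

lemma coord_tensor_same:
  fixes f :: "real^'n \<Rightarrow> 'u \<Rightarrow> real^'n"
  assumes df: "\<forall>t\<ge>1. diffeo (\<lambda>s. f s (u t))"
  shows "coord_tensor f u m ss (tensor_of_coord m M) = M"
  by (rule coord_tensor_eq[of f u, OF df]) (simp add: tensor_of_coord_def)

lemma inner_transpose: "(x::real^'n) \<bullet> (A *v y) = (transpose A *v x) \<bullet> y"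
  by (metis dot_lmul_matrix transpose_matrix_vector)

lemma coord_tensor_step:
  fixes f :: "real^'n \<Rightarrow> 'u \<Rightarrow> real^'n"
  assumes df: "\<forall>t\<ge>1. diffeo (\<lambda>s. f s (u t))"
  shows "coord_tensor f u (Suc m) ss (tensor_of_coord m M)
       = transpose (matrix_inv (jac (\<lambda>x. f x (u (Suc m))) (ss m))) ** M ** matrix_inv (jac (\<lambda>x. f x (u (Suc m))) (ss m))"
proof (rule coord_tensor_eq[of f u, OF df])
  define F where "F = jac (\<lambda>x. f x (u (Suc m))) (ss m)"
  have i: "invertible F" unfolding F_def by (rule F_invertible[of f u, OF df])
  fix v w assume v: "v \<in> tangent f u ss" and w: "w \<in> tangent f u ss"
  have v1: "v (Suc m) = F *v v m" and w1: "w (Suc m) = F *v w m"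
    using v w unfolding tangent_def F_def by auto
  have vs: "v m = matrix_inv F *v v (Suc m)" and ws: "w m = matrix_inv F *v w (Suc m)"
    unfolding v1 w1 using inv_props[OF i] by (simp_all add: matrix_vector_mul_assoc)
  show "tensor_of_coord m M v w = v (Suc m) \<bullet> ((transpose (matrix_inv F) ** M ** matrix_inv F) *v w (Suc m))"
  proof -
    have "(matrix_inv F *v v (Suc m)) \<bullet> (M *v (matrix_inv F *v w (Suc m)))
        = v (Suc m) \<bullet> (transpose (matrix_inv F) *v (M *v (matrix_inv F *v w (Suc m))))"
      by (metis inner_transpose transpose_transpose)
    also have "\<dots> = v (Suc m) \<bullet> ((transpose (matrix_inv F) ** M ** matrix_inv F) *v w (Suc m))"
      by (simp only: matrix_vector_mul_assoc matrix_mul_assoc)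
    finally show ?thesis unfolding tensor_of_coord_def vs ws .
  qed
qed



lemma scaleR_mat_vec: "((k::real) *\<^sub>R (A::real^'n^'m)) *v x = k *\<^sub>R (A *v x)"
  by (rule scaleR_matrix_vector_assoc[symmetric])

lemma mat_eqI: "(\<And>x. (A::real^'n^'m) *v x = B *v x) \<Longrightarrow> A = B"
  using matrix_eq by blast

lemma transpose_inner: "(A *v x) \<bullet> (y::real^'m) = x \<bullet> (transpose A *v y)"
  for A :: "real^'n^'m"
  by (metis inner_transpose transpose_transpose)

lemma spd_inj: assumes "sym_pos_def (M::real^'n^'n)" shows "inj ((*v) M)"
proof (rule injI)
  fix x y assume "M *v x = M *v y"
  then have "M *v (x - y) = 0" by (simp add: matrix_vector_mult_diff_distrib)
  then have "(x - y) \<bullet> (M *v (x - y)) = 0" by simp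
  then show "x = y" using assms unfolding sym_pos_def_def by (metis eq_iff_diff_eq_0 less_irrefl)
qed

lemma spd_invertible: "sym_pos_def (M::real^'n^'n) \<Longrightarrow> invertible M"
  by (metis invertible_left_inverse matrix_left_invertible_injective spd_inj)

lemma inv_sym:
  assumes i: "invertible (A::real^'n^'n)" and s: "transpose A = A"
  shows "transpose (matrix_inv A) = matrix_inv A"
proof -
  have "transpose (matrix_inv A) ** A = mat 1"
    using inv_props(1)[OF i] s by (metis matrix_transpose_mul transpose_mat)
  then show ?thesis using inv_unique(2) by metis
qed

lemma spd_inverse:
  assumes J: "sym_pos_def (J::real^'n^'n)"
  shows "sym_pos_def (matrix_inv J)" "invertible J"
proof -
  show i: "invertible J" by (rule spd_invertible[OF J])
  have s: "transpose J = J" using J unfolding sym_pos_def_def by simp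
  show "sym_pos_def (matrix_inv J)"
    unfolding sym_pos_def_def
  proof (intro conjI allI impI inv_sym[OF i s])
    fix x :: "real^'n" assume x: "x \<noteq> 0"
    define y where "y = matrix_inv J *v x"
    have xy: "x = J *v y" unfolding y_def using inv_props[OF i] by (simp add: matrix_vector_mul_assoc)
    have iy: "matrix_inv J *v (J *v y) = y" using inv_props(2)[OF i] by (simp add: matrix_vector_mul_assoc)
    have "y \<noteq> 0" using x xy by auto
    then have "0 < y \<bullet> (J *v y)" using J unfolding sym_pos_def_def by blast
    also have "y \<bullet> (J *v y) = x \<bullet> (matrix_inv J *v x)"
      unfolding xy iy by (simp add: inner_commute)
    finally show "0 < x \<bullet> (matrix_inv J *v x)" .
  qed
qed

lemma spd_invertible': "sym_pos_def (J::real^'n^'n) \<Longrightarrow> invertible J"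
  by (rule spd_inverse(2))

lemma psd_cong:
  fixes A :: "real^'n^'k" and M :: "real^'k^'k"
  assumes "transpose M = M" "\<And>x. 0 \<le> x \<bullet> (M *v x)"
  shows "transpose (transpose A ** M ** A) = transpose A ** M ** A"
        "0 \<le> x \<bullet> ((transpose A ** M ** A) *v x)"
proof -
  show "transpose (transpose A ** M ** A) = transpose A ** M ** A"
    using assms(1) by (simp add: matrix_transpose_mul matrix_mul_assoc)
  have "x \<bullet> ((transpose A ** M ** A) *v x) = (A *v x) \<bullet> (M *v (A *v x))"
    by (simp add: matrix_vector_mul_assoc[symmetric] transpose_inner del: transpose_matrix_vector)
  then show "0 \<le> x \<bullet> ((transpose A ** M ** A) *v x)" using assms(2) by simp
qed

lemma spd_cong:
  assumes M: "sym_pos_def (M::real^'n^'n)" and A: "invertible (A::real^'n^'n)"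
  shows "sym_pos_def (transpose A ** M ** A)"
  unfolding sym_pos_def_def
proof (intro conjI allI impI)
  have s: "transpose M = M" using M unfolding sym_pos_def_def by simp
  show "transpose (transpose A ** M ** A) = transpose A ** M ** A"
    using s by (simp add: matrix_transpose_mul matrix_mul_assoc)
  fix x :: "real^'n" assume x: "x \<noteq> 0"
  have "A *v x \<noteq> 0"
  proof
    assume "A *v x = 0"
    then have "matrix_inv A *v (A *v x) = 0" by simp
    then show False using inv_props[OF A] x by (simp add: matrix_vector_mul_assoc)
  qed
  then have "0 < (A *v x) \<bullet> (M *v (A *v x))" using M unfolding sym_pos_def_def by blast
  also have "(A *v x) \<bullet> (M *v (A *v x)) = x \<bullet> ((transpose A ** M ** A) *v x)"
    by (simp add: matrix_vector_mul_assoc[symmetric] transpose_inner del: transpose_matrix_vector)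
  finally show "0 < x \<bullet> ((transpose A ** M ** A) *v x)" .
qed

lemma kalman_info:
  fixes Pp Ai :: "real^'n^'n" and H :: "real^'n^'k" and R :: "real^'k^'k"
  assumes invS: "invertible (H ** Pp ** transpose H + R)" and invR: "invertible R"
    and PpAi: "Pp ** Ai = mat 1"
  defines "K \<equiv> Pp ** transpose H ** matrix_inv (H ** Pp ** transpose H + R)"
  defines "Pn \<equiv> (mat 1 - K ** H) ** Pp"
  shows "Pn ** (Ai + transpose H ** matrix_inv R ** H) = mat 1"
    and "Pn *v (transpose H *v (matrix_inv R *v E)) = K *v E"
proof -
  define S where "S = H ** Pp ** transpose H + R"
  define Ri where "Ri = matrix_inv R"
  define Ht where "Ht = transpose H"
  have SSi: "matrix_inv S ** S = mat 1" unfolding S_def using inv_props(2)[OF invS] .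
  have RRi: "R *v (Ri *v z) = z" for z unfolding Ri_def using inv_props(1)[OF invR] by (simp add: matrix_vector_mul_assoc)
  have K0: "K *v y = Pp *v (Ht *v (matrix_inv S *v y))" for y
    unfolding K_def S_def Ht_def by (simp add: matrix_vector_mul_assoc matrix_mul_assoc del: transpose_matrix_vector)
  have SSi': "matrix_inv S *v (S *v z) = z" for z using SSi by (simp add: matrix_vector_mul_assoc)
  have K1: "K *v (S *v z) = Pp *v (Ht *v z)" for z
    unfolding K0 SSi' ..
  have Kadd: "K *v (a + b) = K *v a + K *v b" for a b by (simp add: matrix_vector_right_distrib)
  have Pn: "Pn *v x = Pp *v x - K *v (H *v (Pp *v x))" for x
    unfolding Pn_def by (simp add: matrix_vector_mul_assoc[symmetric] matrix_vector_mult_diff_rdistrib)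
  have S: "S *v z = H *v (Pp *v (Ht *v z)) + R *v z" for z
    unfolding S_def Ht_def by (simp add: matrix_vector_mult_add_rdistrib matrix_vector_mul_assoc[symmetric])
  have key: "Pp *v (Ht *v z) = K *v (H *v (Pp *v (Ht *v z))) + K *v (R *v z)" for z
    using K1[of z] unfolding S Kadd by simp
  have PpAi': "Pp *v (Ai *v x) = x" for x using PpAi by (simp add: matrix_vector_mul_assoc)
  have cancel: "a = b + c \<Longrightarrow> a - b = c" for a b c :: "real^'n" by simp
  have "Pn *v (Ht *v (Ri *v E)) = K *v E"
    unfolding Pn using cancel[OF key[of "Ri *v E"]] RRi[of E] by simp
  then show "Pn *v (transpose H *v (matrix_inv R *v E)) = K *v E" unfolding Ht_def Ri_def .
  show "Pn ** (Ai + transpose H ** matrix_inv R ** H) = mat 1"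
  proof (rule mat_eqI)
    fix x
    have "Pn *v ((Ai + transpose H ** matrix_inv R ** H) *v x) = Pn *v (Ai *v x) + Pn *v (Ht *v (Ri *v (H *v x)))"
      unfolding Ht_def Ri_def
      by (simp add: matrix_vector_mult_add_rdistrib matrix_vector_right_distrib matrix_vector_mul_assoc[symmetric]
          del: transpose_matrix_vector)
    also have "Pn *v (Ai *v x) = x - K *v (H *v x)" unfolding Pn PpAi' ..
    also have "Pn *v (Ht *v (Ri *v (H *v x))) = K *v (H *v x)"
      unfolding Pn using cancel[OF key[of "Ri *v (H *v x)"]] RRi[of "H *v x"] by simp
    finally show "(Pn ** (Ai + transpose H ** matrix_inv R ** H)) *v x = mat 1 *v x"
      by (simp add: matrix_vector_mul_assoc[symmetric])
  qed
qed


lemma ekf_step: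
  fixes F J :: "real^'n^'n" and H :: "real^'n^'k" and R :: "real^'k^'k"
  assumes J: "sym_pos_def J" and R: "sym_pos_def R" and F: "invertible F"
    and eta: "\<eta> > 0" and alpha: "\<alpha> \<ge> 0" and eta': "1 / \<eta>' = (1 / (1 + \<alpha>)) * (1 / \<eta>) + 1"
  defines "P \<equiv> \<eta> *\<^sub>R matrix_inv J"
  defines "Pp \<equiv> F ** P ** transpose F + \<alpha> *\<^sub>R (F ** P ** transpose F)"
  defines "K \<equiv> Pp ** transpose H ** matrix_inv (H ** Pp ** transpose H + R)"
  defines "Pn \<equiv> (mat 1 - K ** H) ** Pp"
  defines "Jn \<equiv> (1 - \<eta>') *\<^sub>R (transpose (matrix_inv F) ** J ** matrix_inv F) + \<eta>' *\<^sub>R (transpose H ** matrix_inv R ** H)"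
  shows "sym_pos_def Jn" "Pn = \<eta>' *\<^sub>R matrix_inv Jn"
    "K *v E = \<eta>' *\<^sub>R (matrix_inv Jn *v (transpose H *v (matrix_inv R *v E)))"
    "0 < \<eta>'" "\<eta>' < 1"
proof -
  define c where "c = 1 + \<alpha>"
  have c: "c > 0" unfolding c_def using alpha by simp
  have ce: "c * \<eta> > 0" using c eta by simp
  have inv1: "1 / \<eta>' = 1 / (c * \<eta>) + 1" using eta' unfolding c_def by simp
  have pos: "1 / (c * \<eta>) > 0" using ce by simp
  then have g1: "1 / \<eta>' > 1" using inv1 by simp
  have g0: "0 < 1 / \<eta>'" using g1 by linarith
  show e0: "0 < \<eta>'" using g0 by (simp only: zero_less_divide_1_iff)
  have "\<eta>' * 1 < \<eta>' * (1 / \<eta>')" by (rule mult_strict_left_mono[OF g1 e0])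
  then show e1: "\<eta>' < 1" using e0 by simp
  have ratio: "1 - \<eta>' = \<eta>' * (1 / (c * \<eta>))"
  proof -
    have "\<eta>' * (1 / \<eta>') = 1" using e0 by simp
    then have "\<eta>' * (1 / (c * \<eta>) + 1) = 1" using inv1 by simp
    then show ?thesis by (simp add: algebra_simps)
  qed
  define Ji where "Ji = matrix_inv J"
  define Fi where "Fi = matrix_inv F"
  define Ri where "Ri = matrix_inv R"
  define Ai where "Ai = (1 / (c * \<eta>)) *\<^sub>R (transpose Fi ** J ** Fi)"
  define B where "B = transpose H ** Ri ** H"
  have Jsym: "transpose J = J" using J unfolding sym_pos_def_def by simp
  have Rsym: "transpose R = R" using R unfolding sym_pos_def_def by simp
  have iJ: "invertible J" by (rule spd_invertible[OF J])
  have iR: "invertible R" by (rule spd_invertible[OF R])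
  have Jis: "sym_pos_def Ji" unfolding Ji_def by (rule spd_inverse(1)[OF J])
  have Ris: "sym_pos_def Ri" unfolding Ri_def by (rule spd_inverse(1)[OF R])
  have Jisym: "transpose Ji = Ji" using Jis unfolding sym_pos_def_def by simp
  have Risym: "transpose Ri = Ri" using Ris unfolding sym_pos_def_def by simp
  have FFi: "F *v (Fi *v x) = x" "Fi *v (F *v x) = x" for x
    unfolding Fi_def using inv_props[OF F] by (simp_all add: matrix_vector_mul_assoc)
  have FtFit: "transpose F *v (transpose Fi *v x) = x" for x
  proof -
    have "transpose F ** transpose Fi = mat 1"
      unfolding Fi_def by (metis inv_props(2)[OF F] matrix_transpose_mul transpose_mat)
    then show ?thesis by (simp add: matrix_vector_mul_assoc del: transpose_matrix_vector)
  qed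
  have JJi: "Ji *v (J *v x) = x" for x unfolding Ji_def using inv_props[OF iJ] by (simp add: matrix_vector_mul_assoc)
  have FPF: "F ** P ** transpose F = \<eta> *\<^sub>R (F ** Ji ** transpose F)"
    unfolding P_def Ji_def by (simp add: matrix_scalar_ac scalar_matrix_assoc[symmetric])
  have Pp: "Pp = (c * \<eta>) *\<^sub>R (F ** Ji ** transpose F)"
    unfolding Pp_def FPF c_def by (simp add: algebra_simps)
  have PpAi: "Pp ** Ai = mat 1"
  proof (rule mat_eqI)
    fix x
    have "(Pp ** Ai) *v x = ((c * \<eta>) * (1 / (c * \<eta>))) *\<^sub>R (F *v (Ji *v (transpose F *v (transpose Fi *v (J *v (Fi *v x))))))"
      unfolding Pp Ai_def
      by (simp add: matrix_vector_mul_assoc[symmetric] matrix_vector_mult_scaleR scalar_matrix_assoc[symmetric]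
            matrix_scalar_ac del: transpose_matrix_vector)
    also have "\<dots> = x" using c eta by (simp add: FtFit JJi FFi del: transpose_matrix_vector)
    finally show "(Pp ** Ai) *v x = mat 1 *v x" by simp
  qed
  have Ppsym: "transpose Pp = Pp"
    unfolding Pp by (simp add: transpose_scalar matrix_transpose_mul Jisym matrix_mul_assoc)
  have Pppsd: "0 \<le> x \<bullet> (Pp *v x)" for x
  proof -
    have "x \<bullet> (Pp *v x) = (c * \<eta>) * (x \<bullet> (F *v (Ji *v (transpose F *v x))))"
      unfolding Pp scaleR_mat_vec by (simp add: matrix_vector_mul_assoc matrix_mul_assoc del: transpose_matrix_vector)
    also have "x \<bullet> (F *v (Ji *v (transpose F *v x))) = (transpose F *v x) \<bullet> (Ji *v (transpose F *v x))"
      by (rule inner_transpose)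
    finally have "x \<bullet> (Pp *v x) = (c * \<eta>) * ((transpose F *v x) \<bullet> (Ji *v (transpose F *v x)))" .
    moreover have "0 \<le> (transpose F *v x) \<bullet> (Ji *v (transpose F *v x))"
      using Jis unfolding sym_pos_def_def by (cases "transpose F *v x = 0") (auto intro: less_imp_le)
    ultimately show ?thesis using ce by simp
  qed
  define S where "S = H ** Pp ** transpose H + R"
  have Sspd: "sym_pos_def S"
    unfolding sym_pos_def_def
  proof (intro conjI allI impI)
    have tadd: "transpose (A + B) = transpose A + transpose B" for A B :: "real^'k^'k"
      by (simp add: transpose_def vec_eq_iff)
    show "transpose S = S"
      unfolding S_def tadd using Ppsym Rsym by (simp add: matrix_transpose_mul matrix_mul_assoc)
    fix x :: "real^'k" assume x: "x \<noteq> 0"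
    have "x \<bullet> (S *v x) = x \<bullet> (H *v (Pp *v (transpose H *v x))) + x \<bullet> (R *v x)"
      unfolding S_def
      by (simp add: matrix_vector_mult_add_rdistrib inner_add_right matrix_vector_mul_assoc matrix_mul_assoc
           del: transpose_matrix_vector)
    also have "x \<bullet> (H *v (Pp *v (transpose H *v x))) = (transpose H *v x) \<bullet> (Pp *v (transpose H *v x))"
      by (rule inner_transpose)
    finally have "x \<bullet> (S *v x) = (transpose H *v x) \<bullet> (Pp *v (transpose H *v x)) + x \<bullet> (R *v x)" .
    moreover have "0 < x \<bullet> (R *v x)" using R x unfolding sym_pos_def_def by blast
    ultimately show "0 < x \<bullet> (S *v x)" using Pppsd[of "transpose H *v x"] by simp
  qed
  have iS: "invertible S" by (rule spd_invertible[OF Sspd])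
  have KI: "Pn ** (Ai + B) = mat 1" "Pn *v (transpose H *v (Ri *v E)) = K *v E"
    using kalman_info(1)[OF iS[unfolded S_def] iR PpAi] kalman_info(2)[OF iS[unfolded S_def] iR PpAi, of E]
    unfolding K_def Pn_def B_def Ri_def by auto
  have Jn: "Jn = \<eta>' *\<^sub>R (Ai + B)"
    unfolding Jn_def Ai_def B_def Fi_def[symmetric] Ri_def[symmetric] ratio
    by (simp add: scaleR_add_right)
  have X: "((1 / \<eta>') *\<^sub>R Pn) ** Jn = mat 1"
  proof -
    have "(Ai + B) ** Pn = mat 1" using KI(1) matrix_left_right_inverse by blast
    then have "Pn ** (Ai + B) = mat 1" using matrix_left_right_inverse by blast
    then have "Pn ** Jn = \<eta>' *\<^sub>R mat 1" unfolding Jn by (simp add: matrix_scalar_ac scalar_matrix_assoc[symmetric])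
    then show ?thesis using e0 by (simp add: scalar_matrix_assoc[symmetric])
  qed
  have iJn: "matrix_inv Jn = (1 / \<eta>') *\<^sub>R Pn" by (rule inv_unique(2)[OF X])
  show Pn: "Pn = \<eta>' *\<^sub>R matrix_inv Jn" unfolding iJn using e0 by simp
  show "K *v E = \<eta>' *\<^sub>R (matrix_inv Jn *v (transpose H *v (matrix_inv R *v E)))"
  proof -
    have "\<eta>' *\<^sub>R (matrix_inv Jn *v w) = Pn *v w" for w
      unfolding Pn scaleR_mat_vec ..
    then show ?thesis unfolding Ri_def[symmetric] using KI(2) by simp
  qed
  show "sym_pos_def Jn"
    unfolding sym_pos_def_def
  proof (intro conjI allI impI)
    have s1: "transpose (transpose Fi ** J ** Fi) = transpose Fi ** J ** Fi"
      using Jsym by (simp add: matrix_transpose_mul matrix_mul_assoc)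
    have s2: "transpose (transpose H ** Ri ** H) = transpose H ** Ri ** H"
      using Risym by (simp add: matrix_transpose_mul matrix_mul_assoc)
    show "transpose Jn = Jn" unfolding Jn_def Fi_def[symmetric] Ri_def[symmetric]
      using s1 s2 by (simp add: transpose_scalar transpose_def vec_eq_iff)
    fix x :: "real^'n" assume x: "x \<noteq> 0"
    have p1: "0 < x \<bullet> ((transpose Fi ** J ** Fi) *v x)"
      using spd_cong[OF J, of Fi] x unfolding Fi_def sym_pos_def_def
      by (metis F invertible_def matrix_left_right_inverse inv_props)
    have p2: "0 \<le> x \<bullet> ((transpose H ** Ri ** H) *v x)"
    proof (rule psd_cong(2)[OF Risym])
      fix z :: "real^'k"
      show "0 \<le> z \<bullet> (Ri *v z)" using Ris unfolding sym_pos_def_def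
        by (cases "z = 0") (auto intro: less_imp_le)
    qed
    have "x \<bullet> (Jn *v x) = (1 - \<eta>') * (x \<bullet> ((transpose Fi ** J ** Fi) *v x)) + \<eta>' * (x \<bullet> ((transpose H ** Ri ** H) *v x))"
      unfolding Jn_def Fi_def[symmetric] Ri_def[symmetric]
      by (simp add: matrix_vector_mult_add_rdistrib inner_add_right scaleR_mat_vec del: transpose_matrix_vector)
    moreover have "0 < (1 - \<eta>') * (x \<bullet> ((transpose Fi ** J ** Fi) *v x))" using p1 e1 by simp
    moreover have "0 \<le> \<eta>' * (x \<bullet> ((transpose H ** Ri ** H) *v x))" using p2 e0 by simp
    ultimately show "0 < x \<bullet> (Jn *v x)" by simp
  qed
qed



lemma pow_le_exp:
  fixes x :: real assumes "x \<ge> 0"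
  shows "x ^ n / fact n \<le> exp x"
proof -
  obtain t where t: "exp x = (\<Sum>m<Suc n. (x ^ m) / fact m) + (exp t / fact (Suc n)) * x ^ Suc n"
    using Maclaurin_exp_le[of x "Suc n"] by blast
  have "x ^ n / fact n \<le> (\<Sum>m<Suc n. (x ^ m) / fact m)"
    by (rule member_le_sum) (use assms in auto)
  moreover have "0 \<le> (exp t / fact (Suc n)) * x ^ Suc n" using assms by simp
  ultimately show ?thesis using t by linarith
qed

lemma pow_le_exp_eps:
  fixes x e :: real assumes "x \<ge> 0" "e > 0"
  shows "x ^ n \<le> (fact n / e ^ n) * exp (e * x)"
proof -
  have "(e*x) ^ n / fact n \<le> exp (e*x)" using pow_le_exp[of "e*x" n] assms by simp
  then have "e^n * x^n \<le> fact n * exp (e*x)"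
    by (simp add: power_mult_distrib divide_le_eq mult.commute)
  then show ?thesis using assms by (simp add: field_simps)
qed

lemma exp_quad_bound:
  fixes x :: real
  shows "\<bar>exp x - 1 - x\<bar> \<le> x\<^sup>2 * exp \<bar>x\<bar>"
proof -
  obtain t where t: "\<bar>t\<bar> \<le> \<bar>x\<bar>" "exp x = (\<Sum>m<2. (x ^ m) / fact m) + (exp t / fact 2) * x ^ 2"
    using Maclaurin_exp_le[of x 2] by blast
  have e: "exp x - 1 - x = (exp t / 2) * x ^ 2" using t(2) by (simp add: numeral_2_eq_2)
  have nn: "0 \<le> (exp t / 2) * x ^ 2" by simp
  have "exp t \<le> exp \<bar>x\<bar>" using t(1) by simp
  moreover have "0 < exp t" by simp
  ultimately have h: "exp t / 2 \<le> exp \<bar>x\<bar>" by linarith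
  have "(exp t / 2) * x ^ 2 \<le> exp \<bar>x\<bar> * x ^ 2"
    by (rule mult_right_mono[OF h]) simp
  have "\<bar>exp x - 1 - x\<bar> = (exp t / 2) * x ^ 2" using e nn by (metis abs_of_nonneg)
  also have "\<dots> \<le> exp \<bar>x\<bar> * x ^ 2" by fact
  also have "\<dots> = x\<^sup>2 * exp \<bar>x\<bar>" by (rule mult.commute)
  finally show ?thesis .
qed

lemma exp_norm_bound:
  fixes x b :: "real^'k" and r :: real
  assumes "r \<ge> 0"
  shows "exp (b \<bullet> x + (r / CARD('k)) * norm x)
     \<le> (\<Sum>i\<in>UNIV. exp ((b + r *\<^sub>R axis i 1) \<bullet> x) + exp ((b - r *\<^sub>R axis i 1) \<bullet> x))"
proof -
  define M where "M = Max (range (\<lambda>i. \<bar>x $ i\<bar>))"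
  have "M \<in> range (\<lambda>i. \<bar>x $ i\<bar>)" unfolding M_def by (rule Max_in) auto
  then obtain i0 where i0: "M = \<bar>x $ i0\<bar>" by auto
  have le: "\<bar>x $ i\<bar> \<le> M" for i unfolding M_def by (rule Max_ge) auto
  have "norm x \<le> (\<Sum>i\<in>UNIV. \<bar>x $ i\<bar>)" by (rule norm_le_l1_cart)
  also have "\<dots> \<le> of_nat (card (UNIV::'k set)) * M" by (rule sum_bounded_above) (use le in auto)
  finally have nx: "norm x \<le> CARD('k) * M" by simp
  have "(r / CARD('k)) * norm x \<le> (r / CARD('k)) * (CARD('k) * M)"
    by (rule mult_left_mono[OF nx]) (use assms in simp)
  also have "\<dots> = r * M" by simp
  finally have a: "(r / CARD('k)) * norm x \<le> r * \<bar>x $ i0\<bar>" using i0 by simp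
  have e1: "(b + r *\<^sub>R axis i0 1) \<bullet> x = b \<bullet> x + r * x $ i0"
    by (simp add: inner_add_left inner_axis' )
  have e2: "(b - r *\<^sub>R axis i0 1) \<bullet> x = b \<bullet> x - r * x $ i0"
    by (simp add: inner_diff_left inner_axis' )
  have "exp (b \<bullet> x + (r / CARD('k)) * norm x) \<le> exp (b \<bullet> x + r * \<bar>x $ i0\<bar>)"
    using a by simp
  also have "\<dots> \<le> exp ((b + r *\<^sub>R axis i0 1) \<bullet> x) + exp ((b - r *\<^sub>R axis i0 1) \<bullet> x)"
    unfolding e1 e2 by (cases "x $ i0 \<ge> 0") (auto simp: abs_if)
  also have "\<dots> \<le> (\<Sum>i\<in>UNIV. exp ((b + r *\<^sub>R axis i 1) \<bullet> x) + exp ((b - r *\<^sub>R axis i 1) \<bullet> x))"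
    by (rule member_le_sum[where f="\<lambda>i. exp ((b + r *\<^sub>R axis i 1) \<bullet> x) + exp ((b - r *\<^sub>R axis i 1) \<bullet> x)"])
       (auto intro: add_nonneg_nonneg)
  finally show ?thesis .
qed

lemma quad_has_derivative:
  fixes G :: "'a::real_normed_vector \<Rightarrow> 'b::real_normed_vector"
  assumes L: "bounded_linear L" and r: "r > 0" and C: "C \<ge> 0"
    and bnd: "\<And>x. norm (x - x0) < r \<Longrightarrow> norm (G x - G x0 - L (x - x0)) \<le> C * (norm (x - x0))\<^sup>2"
  shows "(G has_derivative L) (at x0)"
  unfolding has_derivative_at_alt
proof (intro conjI allI impI L)
  fix e :: real assume e: "e > 0"
  show "\<exists>d>0. \<forall>y. norm (y - x0) < d \<longrightarrow> norm (G y - G x0 - L (y - x0)) \<le> e * norm (y - x0)"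
  proof (intro exI[of _ "min r (e / (C+1))"] conjI allI impI)
    show "min r (e/(C+1)) > 0" using r e C by auto
    fix y assume y: "norm (y - x0) < min r (e / (C+1))"
    have n0: "0 \<le> norm (y - x0)" by simp
    have "norm (G y - G x0 - L (y - x0)) \<le> C * (norm (y-x0))\<^sup>2" using y by (intro bnd) auto
    also have "\<dots> \<le> ((C+1) * norm (y-x0)) * norm (y-x0)"
      using C n0 by (simp add: power2_eq_square distrib_right)
    also have "(C+1) * norm (y-x0) \<le> e"
      using y C by (simp add: field_simps)
    then have "((C+1) * norm (y-x0)) * norm (y-x0) \<le> e * norm (y - x0)"
      by (rule mult_right_mono) simp
    finally show "norm (G y - G x0 - L (y - x0)) \<le> e * norm (y - x0)" .
  qed
qed

lemma rem_bound:
  fixes B x s :: real assumes "\<bar>x\<bar> \<le> s"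
  shows "\<bar>exp (B + x) - exp B - x * exp B\<bar> \<le> x\<^sup>2 * exp (B + s)"
proof -
  have "exp (B + x) - exp B - x * exp B = exp B * (exp x - 1 - x)"
    by (simp add: exp_add algebra_simps)
  then have "\<bar>exp (B + x) - exp B - x * exp B\<bar> = exp B * \<bar>exp x - 1 - x\<bar>"
    by (simp add: abs_mult)
  also have "\<dots> \<le> exp B * (x\<^sup>2 * exp \<bar>x\<bar>)"
    by (rule mult_left_mono[OF exp_quad_bound]) simp
  also have "\<dots> \<le> exp B * (x\<^sup>2 * exp s)"
    using assms by (intro mult_left_mono) auto
  also have "\<dots> = x\<^sup>2 * exp (B + s)" by (simp add: exp_add)
  finally show ?thesis .
qed


locale ef_loc =
  fixes lam :: "'y measure" and T :: "'y \<Rightarrow> real^'k"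
  assumes ef: "expfam_stats lam T"
begin

lemma T_meas[measurable]: "T \<in> borel_measurable lam"
  using ef by (simp add: expfam_stats_def)

lemma T_nth_meas[measurable]: "(\<lambda>y. T y $ i) \<in> borel_measurable lam"
proof -
  have "(\<lambda>y. T y $ i) = (\<lambda>y. T y \<bullet> axis i 1)" by (simp add: cart_eq_inner_axis)
  show ?thesis unfolding \<open>(\<lambda>y. T y $ i) = (\<lambda>y. T y \<bullet> axis i 1)\<close> by measurable
qed

abbreviation "NS \<equiv> nat_space lam T"

lemma integrable_exp_norm:
  assumes "cball b r \<subseteq> NS" "r \<ge> 0"
  shows "integrable lam (\<lambda>y. exp (b \<bullet> T y + (r / CARD('k)) * norm (T y)))"
proof (rule Bochner_Integration.integrable_bound)
  have mem: "b + r *\<^sub>R axis i 1 \<in> NS" "b - r *\<^sub>R axis i 1 \<in> NS" for i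
    using assms by (auto intro!: subsetD[OF assms(1)] simp: dist_norm norm_axis_1)
  show "integrable lam (\<lambda>y. \<Sum>i\<in>UNIV. exp ((b + r *\<^sub>R axis i 1) \<bullet> T y) + exp ((b - r *\<^sub>R axis i 1) \<bullet> T y))"
    using mem by (intro Bochner_Integration.integrable_sum Bochner_Integration.integrable_add) (auto simp: nat_space_def)
  show "(\<lambda>y. exp (b \<bullet> T y + (r / CARD('k)) * norm (T y))) \<in> borel_measurable lam" by measurable
  show "AE y in lam. norm (exp (b \<bullet> T y + (r / CARD('k)) * norm (T y)))
      \<le> norm (\<Sum>i\<in>UNIV. exp ((b + r *\<^sub>R axis i 1) \<bullet> T y) + exp ((b - r *\<^sub>R axis i 1) \<bullet> T y))"
  proof (rule AE_I2)
    fix y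
    have "0 \<le> (\<Sum>i\<in>UNIV. exp ((b + r *\<^sub>R axis i 1) \<bullet> T y) + exp ((b - r *\<^sub>R axis i 1) \<bullet> T y))"
      by (intro sum_nonneg add_nonneg_nonneg) auto
    then show "norm (exp (b \<bullet> T y + (r / CARD('k)) * norm (T y)))
      \<le> norm (\<Sum>i\<in>UNIV. exp ((b + r *\<^sub>R axis i 1) \<bullet> T y) + exp ((b - r *\<^sub>R axis i 1) \<bullet> T y))"
      using exp_norm_bound[OF assms(2), of b "T y"] by simp
  qed
qed

lemma interior_dom0:
  assumes "b \<in> interior NS"
  obtains \<rho> where "\<rho> > 0" "integrable lam (\<lambda>y. exp (b \<bullet> T y + \<rho> * norm (T y)))"
proof -
  obtain r where r: "r > 0" "cball b r \<subseteq> interior NS"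
    using assms open_contains_cball open_interior by blast
  then have "cball b r \<subseteq> NS" using interior_subset by blast
  from integrable_exp_norm[OF this] r(1) show ?thesis
    by (intro that[of "r / CARD('k)"]) auto
qed

lemma interior_dom:
  assumes "b \<in> interior NS"
  obtains \<rho> where "\<rho> > 0" "\<And>n. integrable lam (\<lambda>y. norm (T y) ^ n * exp (b \<bullet> T y + \<rho> * norm (T y)))"
proof -
  obtain \<rho> where r: "\<rho> > 0" "integrable lam (\<lambda>y. exp (b \<bullet> T y + \<rho> * norm (T y)))"
    using interior_dom0[OF assms] by blast
  have "integrable lam (\<lambda>y. norm (T y) ^ n * exp (b \<bullet> T y + (\<rho>/2) * norm (T y)))" for n
  proof (rule Bochner_Integration.integrable_bound)
    show "integrable lam (\<lambda>y. (fact n / (\<rho>/2) ^ n) * exp (b \<bullet> T y + \<rho> * norm (T y)))"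
      using r(2) by simp
    show "(\<lambda>y. norm (T y) ^ n * exp (b \<bullet> T y + (\<rho>/2) * norm (T y))) \<in> borel_measurable lam"
      by measurable
    show "AE y in lam. norm (norm (T y) ^ n * exp (b \<bullet> T y + (\<rho>/2) * norm (T y)))
       \<le> norm ((fact n / (\<rho>/2) ^ n) * exp (b \<bullet> T y + \<rho> * norm (T y)))"
    proof (rule AE_I2)
      fix y
      have p: "norm (T y) ^ n \<le> (fact n / (\<rho>/2) ^ n) * exp ((\<rho>/2) * norm (T y))"
        using pow_le_exp_eps[of "norm (T y)" "\<rho>/2" n] r(1) by simp
      have "norm (T y) ^ n * exp (b \<bullet> T y + (\<rho>/2) * norm (T y))
          = norm (T y) ^ n * exp ((\<rho>/2) * norm (T y)) * exp (b \<bullet> T y)"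
        by (simp add: exp_add)
      also have "\<dots> \<le> (fact n / (\<rho>/2) ^ n) * exp ((\<rho>/2) * norm (T y)) * exp ((\<rho>/2) * norm (T y)) * exp (b \<bullet> T y)"
        by (intro mult_right_mono p) auto
      also have "\<dots> = (fact n / (\<rho>/2) ^ n) * exp (b \<bullet> T y + \<rho> * norm (T y))"
        by (simp add: exp_add[symmetric] field_simps)
      finally show "norm (norm (T y) ^ n * exp (b \<bullet> T y + (\<rho>/2) * norm (T y)))
       \<le> norm ((fact n / (\<rho>/2) ^ n) * exp (b \<bullet> T y + \<rho> * norm (T y)))"
        using r(1) by simp
    qed
  qed
  then show ?thesis using r(1) by (intro that[of "\<rho>/2"]) auto
qed


lemma DUI:
  fixes \<Phi> :: "'y \<Rightarrow> 'b::{banach,second_countable_topology}"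
  assumes b: "b \<in> interior NS" and Phim[measurable]: "\<Phi> \<in> borel_measurable lam"
    and bnd: "\<And>y. norm (\<Phi> y) \<le> a + norm (T y)"
  shows "((\<lambda>\<beta>. \<integral>y. exp (\<beta> \<bullet> T y) *\<^sub>R \<Phi> y \<partial>lam) has_derivative
          (\<lambda>d. \<integral>y. ((d \<bullet> T y) * exp (b \<bullet> T y)) *\<^sub>R \<Phi> y \<partial>lam)) (at b)"
proof -
  obtain \<rho> where \<rho>: "\<rho> > 0" and G: "\<And>n. integrable lam (\<lambda>y. norm (T y) ^ n * exp (b \<bullet> T y + \<rho> * norm (T y)))"
    using interior_dom[OF b] by blast
  define G where "G n y = norm (T y) ^ n * exp (b \<bullet> T y + \<rho> * norm (T y))" for n y
  have Gi: "integrable lam (G n)" for n using G unfolding G_def by simp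
  have G0: "G n y \<ge> 0" for n y unfolding G_def by simp
  define a' where "a' = \<bar>a\<bar>"
  have a': "a' \<ge> 0" unfolding a'_def by simp
  have bnd': "norm (\<Phi> y) \<le> a' + norm (T y)" for y using bnd[of y] unfolding a'_def by linarith
  have cs: "\<bar>d \<bullet> T y\<bar> \<le> norm d * norm (T y)" for d y by (rule Cauchy_Schwarz_ineq2)
  have I1: "integrable lam (\<lambda>y. exp (\<beta> \<bullet> T y) *\<^sub>R \<Phi> y)" if "norm (\<beta> - b) < \<rho>" for \<beta>
  proof (rule Bochner_Integration.integrable_bound)
    show "integrable lam (\<lambda>y. a' * G 0 y + G 1 y)" using Gi by auto
    show "(\<lambda>y. exp (\<beta> \<bullet> T y) *\<^sub>R \<Phi> y) \<in> borel_measurable lam" by measurable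
    show "AE y in lam. norm (exp (\<beta> \<bullet> T y) *\<^sub>R \<Phi> y) \<le> norm (a' * G 0 y + G 1 y)"
    proof (rule AE_I2)
      fix y
      have "\<beta> \<bullet> T y = b \<bullet> T y + (\<beta> - b) \<bullet> T y" by (simp add: inner_diff_left)
      also have "\<dots> \<le> b \<bullet> T y + \<rho> * norm (T y)"
        using cs[of "\<beta> - b" y] that mult_right_mono[of "norm (\<beta> - b)" \<rho> "norm (T y)"] by auto
      finally have e: "exp (\<beta> \<bullet> T y) \<le> exp (b \<bullet> T y + \<rho> * norm (T y))" by simp
      have "norm (exp (\<beta> \<bullet> T y) *\<^sub>R \<Phi> y) = exp (\<beta> \<bullet> T y) * norm (\<Phi> y)" by simp
      also have "\<dots> \<le> exp (b \<bullet> T y + \<rho> * norm (T y)) * (a' + norm (T y))"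
        by (intro mult_mono e bnd') auto
      also have "\<dots> = a' * G 0 y + G 1 y" unfolding G_def by (simp add: algebra_simps)
      finally show "norm (exp (\<beta> \<bullet> T y) *\<^sub>R \<Phi> y) \<le> norm (a' * G 0 y + G 1 y)"
        using G0 a' by simp
    qed
  qed
  have I2: "integrable lam (\<lambda>y. ((d \<bullet> T y) * exp (b \<bullet> T y)) *\<^sub>R \<Phi> y)" for d
  proof (rule Bochner_Integration.integrable_bound)
    show "integrable lam (\<lambda>y. norm d * (a' * G 1 y + G 2 y))" using Gi by auto
    show "(\<lambda>y. ((d \<bullet> T y) * exp (b \<bullet> T y)) *\<^sub>R \<Phi> y) \<in> borel_measurable lam" by measurable
    show "AE y in lam. norm (((d \<bullet> T y) * exp (b \<bullet> T y)) *\<^sub>R \<Phi> y) \<le> norm (norm d * (a' * G 1 y + G 2 y))"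
    proof (rule AE_I2)
      fix y
      have e: "exp (b \<bullet> T y) \<le> exp (b \<bullet> T y + \<rho> * norm (T y))" using \<rho> by simp
      have "norm (((d \<bullet> T y) * exp (b \<bullet> T y)) *\<^sub>R \<Phi> y) = \<bar>d \<bullet> T y\<bar> * exp (b \<bullet> T y) * norm (\<Phi> y)"
        by (simp add: abs_mult)
      also have "\<dots> \<le> (norm d * norm (T y)) * exp (b \<bullet> T y + \<rho> * norm (T y)) * (a' + norm (T y))"
        by (intro mult_mono cs e bnd') auto
      also have "\<dots> = norm d * (a' * G 1 y + G 2 y)" unfolding G_def by (simp add: algebra_simps power2_eq_square)
      finally show "norm (((d \<bullet> T y) * exp (b \<bullet> T y)) *\<^sub>R \<Phi> y) \<le> norm (norm d * (a' * G 1 y + G 2 y))"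
        using G0 a' by simp
    qed
  qed
  define L where "L d = (\<integral>y. ((d \<bullet> T y) * exp (b \<bullet> T y)) *\<^sub>R \<Phi> y \<partial>lam)" for d
  define K where "K = (\<integral>y. a' * G 1 y + G 2 y \<partial>lam)"
  have bl: "bounded_linear L"
  proof (rule bounded_linear_intro[where K=K])
    fix x y
    show "L (x + y) = L x + L y" unfolding L_def
      by (subst Bochner_Integration.integral_add[symmetric]) (auto intro: I2 simp: inner_add_left algebra_simps)
  next
    fix r x
    show "L (r *\<^sub>R x) = r *\<^sub>R L x" unfolding L_def
      by (subst integral_scaleR_right[symmetric]) (simp add: algebra_simps)
  next
    fix x
    have "norm (L x) \<le> (\<integral>y. norm (((x \<bullet> T y) * exp (b \<bullet> T y)) *\<^sub>R \<Phi> y) \<partial>lam)"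
      unfolding L_def by (rule integral_norm_bound)
    also have "\<dots> \<le> (\<integral>y. norm x * (a' * G 1 y + G 2 y) \<partial>lam)"
    proof (rule integral_mono)
      show "integrable lam (\<lambda>y. norm (((x \<bullet> T y) * exp (b \<bullet> T y)) *\<^sub>R \<Phi> y))"
        using I2 by (rule integrable_norm)
      show "integrable lam (\<lambda>y. norm x * (a' * G 1 y + G 2 y))" using Gi by auto
      fix y
      have e: "exp (b \<bullet> T y) \<le> exp (b \<bullet> T y + \<rho> * norm (T y))" using \<rho> by simp
      have "norm (((x \<bullet> T y) * exp (b \<bullet> T y)) *\<^sub>R \<Phi> y) = \<bar>x \<bullet> T y\<bar> * exp (b \<bullet> T y) * norm (\<Phi> y)"
        by (simp add: abs_mult)
      also have "\<dots> \<le> (norm x * norm (T y)) * exp (b \<bullet> T y + \<rho> * norm (T y)) * (a' + norm (T y))"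
        by (intro mult_mono cs e bnd') auto
      also have "\<dots> = norm x * (a' * G 1 y + G 2 y)" unfolding G_def by (simp add: algebra_simps power2_eq_square)
      finally show "norm (((x \<bullet> T y) * exp (b \<bullet> T y)) *\<^sub>R \<Phi> y) \<le> norm x * (a' * G 1 y + G 2 y)" .
    qed
    also have "\<dots> = norm x * K" unfolding K_def by simp
    finally show "norm (L x) \<le> norm x * K" .
  qed
  define C where "C = (\<integral>y. a' * G 2 y + G 3 y \<partial>lam)"
  have C0: "C \<ge> 0" unfolding C_def using G0 a' by (intro integral_nonneg_AE) auto
  show ?thesis unfolding L_def[symmetric]
  proof (rule quad_has_derivative[OF bl \<rho> C0])
    fix \<beta> assume \<beta>: "norm (\<beta> - b) < \<rho>"
    define F where "F \<beta> y = exp (\<beta> \<bullet> T y) *\<^sub>R \<Phi> y" for \<beta> y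
    have b0: "norm (b - b) < \<rho>" using \<rho> by simp
    have "(\<integral>y. F \<beta> y \<partial>lam) - (\<integral>y. F b y \<partial>lam) - L (\<beta> - b)
        = (\<integral>y. F \<beta> y - F b y - ((((\<beta> - b) \<bullet> T y) * exp (b \<bullet> T y)) *\<^sub>R \<Phi> y) \<partial>lam)"
      unfolding L_def F_def using I1[OF \<beta>] I1[OF b0] I2[of "\<beta> - b"]
      by (simp add: Bochner_Integration.integral_diff)
    also have "norm \<dots> \<le> (\<integral>y. norm (F \<beta> y - F b y - ((((\<beta> - b) \<bullet> T y) * exp (b \<bullet> T y)) *\<^sub>R \<Phi> y)) \<partial>lam)"
      by (rule integral_norm_bound)
    also have "\<dots> \<le> (\<integral>y. (norm (\<beta> - b))\<^sup>2 * (a' * G 2 y + G 3 y) \<partial>lam)"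
    proof (rule integral_mono)
      show "integrable lam (\<lambda>y. norm (F \<beta> y - F b y - ((((\<beta> - b) \<bullet> T y) * exp (b \<bullet> T y)) *\<^sub>R \<Phi> y)))"
        unfolding F_def using I1[OF \<beta>] I1[OF b0] I2[of "\<beta> - b"] by auto
      show "integrable lam (\<lambda>y. (norm (\<beta> - b))\<^sup>2 * (a' * G 2 y + G 3 y))" using Gi by auto
      fix y
      define x where "x = (\<beta> - b) \<bullet> T y"
      have xb: "\<bar>x\<bar> \<le> \<rho> * norm (T y)" unfolding x_def
        using cs[of "\<beta> - b" y] \<beta> mult_right_mono[of "norm (\<beta> - b)" \<rho> "norm (T y)"] by auto
      have x2: "x\<^sup>2 \<le> (norm (\<beta> - b))\<^sup>2 * (norm (T y))\<^sup>2" unfolding x_def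
        using cs[of "\<beta> - b" y] by (metis abs_ge_zero power_mono power_mult_distrib power2_abs)
      have eb: "\<beta> \<bullet> T y = b \<bullet> T y + x" unfolding x_def by (simp add: inner_diff_left)
      have "F \<beta> y - F b y - ((((\<beta> - b) \<bullet> T y) * exp (b \<bullet> T y)) *\<^sub>R \<Phi> y)
          = (exp (b \<bullet> T y + x) - exp (b \<bullet> T y) - x * exp (b \<bullet> T y)) *\<^sub>R \<Phi> y"
        unfolding F_def eb x_def[symmetric] by (simp add: algebra_simps)
      then have "norm (F \<beta> y - F b y - ((((\<beta> - b) \<bullet> T y) * exp (b \<bullet> T y)) *\<^sub>R \<Phi> y))
          = \<bar>exp (b \<bullet> T y + x) - exp (b \<bullet> T y) - x * exp (b \<bullet> T y)\<bar> * norm (\<Phi> y)" by simp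
      also have "\<dots> \<le> (x\<^sup>2 * exp (b \<bullet> T y + \<rho> * norm (T y))) * (a' + norm (T y))"
        by (intro mult_mono rem_bound xb bnd') auto
      also have "\<dots> \<le> ((norm (\<beta> - b))\<^sup>2 * (norm (T y))\<^sup>2 * exp (b \<bullet> T y + \<rho> * norm (T y))) * (a' + norm (T y))"
        by (intro mult_right_mono x2) (auto intro: add_nonneg_nonneg a')
      also have "\<dots> = (norm (\<beta> - b))\<^sup>2 * (a' * G 2 y + G 3 y)"
        unfolding G_def by (simp add: algebra_simps power2_eq_square power3_eq_cube)
      finally show "norm (F \<beta> y - F b y - ((((\<beta> - b) \<bullet> T y) * exp (b \<bullet> T y)) *\<^sub>R \<Phi> y))
         \<le> (norm (\<beta> - b))\<^sup>2 * (a' * G 2 y + G 3 y)" .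
    qed
    also have "\<dots> = C * (norm (\<beta> - b))\<^sup>2" unfolding C_def by (simp add: mult.commute)
    finally show "norm ((\<integral>y. exp (\<beta> \<bullet> T y) *\<^sub>R \<Phi> y \<partial>lam) - (\<integral>y. exp (b \<bullet> T y) *\<^sub>R \<Phi> y \<partial>lam) - L (\<beta> - b))
        \<le> C * (norm (\<beta> - b))\<^sup>2" unfolding F_def .
  qed
qed


lemma lam_nontriv: "\<not> (AE y in lam. False)"
proof
  assume "AE y in lam. False"
  then have "AE y in lam. axis (undefined::'k) (1::real) \<bullet> T y = 0" by (rule AE_mp) simp
  with ef have "axis (undefined::'k) (1::real) = 0" unfolding expfam_stats_def by blast
  then show False by (simp add: axis_eq_0_iff)
qed

lemma Z_pos: assumes "b \<in> NS" shows "Zf lam T b > 0"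
proof -
  have i: "integrable lam (\<lambda>y. exp (b \<bullet> T y))" using assms by (simp add: nat_space_def)
  have "Zf lam T b \<ge> 0" unfolding Zf_def by (intro integral_nonneg_AE) auto
  moreover have "Zf lam T b \<noteq> 0"
  proof
    assume "Zf lam T b = 0"
    then have "AE y in lam. exp (b \<bullet> T y) = 0"
      using integral_nonneg_eq_0_iff_AE[OF i] unfolding Zf_def by auto
    then have "AE y in lam. False" by simp
    with lam_nontriv show False by blast
  qed
  ultimately show ?thesis by simp
qed

lemma int_poly:
  fixes g :: "'y \<Rightarrow> 'b::{banach,second_countable_topology}"
  assumes b: "b \<in> interior NS" and [measurable]: "g \<in> borel_measurable lam"
    and bnd: "\<And>y. norm (g y) \<le> ca + cb * norm (T y) + cc * (norm (T y))\<^sup>2"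
  shows "integrable lam (\<lambda>y. exp (b \<bullet> T y) *\<^sub>R g y)"
proof -
  obtain \<rho> where \<rho>: "\<rho> > 0" and G: "\<And>n. integrable lam (\<lambda>y. norm (T y) ^ n * exp (b \<bullet> T y + \<rho> * norm (T y)))"
    using interior_dom[OF b] by blast
  show ?thesis
  proof (rule Bochner_Integration.integrable_bound)
    show "integrable lam (\<lambda>y. \<bar>ca\<bar> * (norm (T y) ^ 0 * exp (b \<bullet> T y + \<rho> * norm (T y)))
       + \<bar>cb\<bar> * (norm (T y) ^ 1 * exp (b \<bullet> T y + \<rho> * norm (T y)))
       + \<bar>cc\<bar> * (norm (T y) ^ 2 * exp (b \<bullet> T y + \<rho> * norm (T y))))"
      using G[of 0] G[of 1] G[of 2] by (intro Bochner_Integration.integrable_add integrable_mult_right) auto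
    show "(\<lambda>y. exp (b \<bullet> T y) *\<^sub>R g y) \<in> borel_measurable lam" by measurable
    show "AE y in lam. norm (exp (b \<bullet> T y) *\<^sub>R g y) \<le> norm (\<bar>ca\<bar> * (norm (T y) ^ 0 * exp (b \<bullet> T y + \<rho> * norm (T y)))
       + \<bar>cb\<bar> * (norm (T y) ^ 1 * exp (b \<bullet> T y + \<rho> * norm (T y)))
       + \<bar>cc\<bar> * (norm (T y) ^ 2 * exp (b \<bullet> T y + \<rho> * norm (T y))))"
    proof (rule AE_I2)
      fix y
      define E where "E = exp (b \<bullet> T y + \<rho> * norm (T y))"
      have E0: "E \<ge> 0" unfolding E_def by simp
      have e: "exp (b \<bullet> T y) \<le> E" unfolding E_def using \<rho> by simp
      have "norm (g y) \<le> \<bar>ca\<bar> + \<bar>cb\<bar> * norm (T y) + \<bar>cc\<bar> * (norm (T y))\<^sup>2"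
        using bnd[of y] abs_ge_self[of cb] abs_ge_self[of cc]
          mult_right_mono[of cb "\<bar>cb\<bar>" "norm (T y)"] mult_right_mono[of cc "\<bar>cc\<bar>" "(norm (T y))\<^sup>2"]
        by auto
      then have "exp (b \<bullet> T y) * norm (g y) \<le> E * (\<bar>ca\<bar> + \<bar>cb\<bar> * norm (T y) + \<bar>cc\<bar> * (norm (T y))\<^sup>2)"
        by (rule mult_mono[OF e]) (use E0 in auto)
      then have "norm (exp (b \<bullet> T y) *\<^sub>R g y) \<le> E * (\<bar>ca\<bar> + \<bar>cb\<bar> * norm (T y) + \<bar>cc\<bar> * (norm (T y))\<^sup>2)"
        by simp
      also have "\<dots> = \<bar>ca\<bar> * (norm (T y) ^ 0 * E) + \<bar>cb\<bar> * (norm (T y) ^ 1 * E) + \<bar>cc\<bar> * (norm (T y) ^ 2 * E)"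
        by (simp add: algebra_simps)
      finally show "norm (exp (b \<bullet> T y) *\<^sub>R g y) \<le> norm (\<bar>ca\<bar> * (norm (T y) ^ 0 * exp (b \<bullet> T y + \<rho> * norm (T y)))
       + \<bar>cb\<bar> * (norm (T y) ^ 1 * exp (b \<bullet> T y + \<rho> * norm (T y)))
       + \<bar>cc\<bar> * (norm (T y) ^ 2 * exp (b \<bullet> T y + \<rho> * norm (T y))))"
        unfolding E_def[symmetric] using E0 by simp
    qed
  qed
qed

lemma interior_NS: "b \<in> interior NS \<Longrightarrow> b \<in> NS" using interior_subset by blast

lemma dens_pos: "b \<in> NS \<Longrightarrow> dens lam T b y > 0"
  unfolding dens_def using Z_pos by simp

lemma int_dens:
  fixes g :: "'y \<Rightarrow> 'b::{banach,second_countable_topology}"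
  assumes b: "b \<in> interior NS" and [measurable]: "g \<in> borel_measurable lam"
    and bnd: "\<And>y. norm (g y) \<le> ca + cb * norm (T y) + cc * (norm (T y))\<^sup>2"
  shows "integrable lam (\<lambda>y. dens lam T b y *\<^sub>R g y)"
proof -
  have "integrable lam (\<lambda>y. (1 / Zf lam T b) *\<^sub>R (exp (b \<bullet> T y) *\<^sub>R g y))"
    by (rule integrable_scaleR_right[OF int_poly[OF assms]])
  moreover have "(\<lambda>y. (1 / Zf lam T b) *\<^sub>R (exp (b \<bullet> T y) *\<^sub>R g y)) = (\<lambda>y. dens lam T b y *\<^sub>R g y)"
    by (simp add: dens_def)
  ultimately show ?thesis by simp
qed

lemma meas_dens[measurable]: "dens lam T b \<in> borel_measurable lam"
  unfolding dens_def by measurable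

lemma int_dens_1: assumes "b \<in> interior NS" shows "(\<integral>y. dens lam T b y \<partial>lam) = 1"
proof -
  have z: "Zf lam T b > 0" using Z_pos[OF interior_NS[OF assms]] .
  have "(\<integral>y. dens lam T b y \<partial>lam) = (\<integral>y. exp (b \<bullet> T y) \<partial>lam) / Zf lam T b"
    unfolding dens_def by simp
  also have "\<dots> = 1" using z unfolding Zf_def by simp
  finally show ?thesis .
qed

definition "CovB b = (\<chi> i j. \<integral>y. (T y $ i - meanT lam T b $ i) * (T y $ j - meanT lam T b $ j) * dens lam T b y \<partial>lam)"

lemma nT_bound: "norm (T y - m) \<le> norm m + norm (T y)"
  by (metis add.commute norm_triangle_ineq4)

lemma covv:
  assumes b: "b \<in> interior NS"
  shows "CovB b *v h = (\<integral>y. (dens lam T b y * (h \<bullet> (T y - meanT lam T b))) *\<^sub>R (T y - meanT lam T b) \<partial>lam)"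
proof -
  define m where "m = meanT lam T b"
  define V where "V y = (dens lam T b y * (h \<bullet> (T y - m))) *\<^sub>R (T y - m)" for y
  have hb: "\<bar>h \<bullet> (T y - m)\<bar> \<le> norm h * (norm m + norm (T y))" for y
    using Cauchy_Schwarz_ineq2[of h "T y - m"] nT_bound[of y m]
    by (meson mult_left_mono norm_ge_zero order_trans)
  have "integrable lam (\<lambda>y. dens lam T b y *\<^sub>R ((h \<bullet> (T y - m)) *\<^sub>R (T y - m)))"
  proof (rule int_dens[OF b, where ca="norm h * (norm m)^2" and cb="2 * norm h * norm m" and cc="norm h"])
    show "(\<lambda>y. (h \<bullet> (T y - m)) *\<^sub>R (T y - m)) \<in> borel_measurable lam" by measurable
    fix y
    have "norm ((h \<bullet> (T y - m)) *\<^sub>R (T y - m)) = \<bar>h \<bullet> (T y - m)\<bar> * norm (T y - m)" by simp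
    also have "\<dots> \<le> (norm h * (norm m + norm (T y))) * (norm m + norm (T y))"
      by (intro mult_mono hb nT_bound) auto
    also have "\<dots> = norm h * (norm m)\<^sup>2 + 2 * norm h * norm m * norm (T y) + norm h * (norm (T y))\<^sup>2"
      by (simp add: algebra_simps power2_eq_square)
    finally show "norm ((h \<bullet> (T y - m)) *\<^sub>R (T y - m)) \<le> norm h * (norm m)\<^sup>2 + 2 * norm h * norm m * norm (T y) + norm h * (norm (T y))\<^sup>2" .
  qed
  then have Vi: "integrable lam V" unfolding V_def[abs_def] by simp
  have cb: "\<bar>(T y $ i - m $ i) * (T y $ j - m $ j)\<bar> \<le> (norm m)\<^sup>2 + 2 * norm m * norm (T y) + (norm (T y))\<^sup>2" for y i j
  proof -
    have "\<bar>T y $ i - m $ i\<bar> \<le> norm m + norm (T y)" "\<bar>T y $ j - m $ j\<bar> \<le> norm m + norm (T y)"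
      using component_le_norm_cart[of "T y - m"] nT_bound[of y m] by (metis order_trans vector_minus_component)+
    then have "\<bar>(T y $ i - m $ i) * (T y $ j - m $ j)\<bar> \<le> (norm m + norm (T y)) * (norm m + norm (T y))"
      by (simp add: abs_mult mult_mono)
    then show ?thesis by (simp add: algebra_simps power2_eq_square)
  qed
  have ci: "integrable lam (\<lambda>y. (T y $ i - m $ i) * (T y $ j - m $ j) * dens lam T b y)" for i j
  proof -
    have "integrable lam (\<lambda>y. dens lam T b y *\<^sub>R ((T y $ i - m $ i) * (T y $ j - m $ j)))"
    proof (rule int_dens[OF b, where ca="(norm m)\<^sup>2" and cb="2 * norm m" and cc=1])
      show "(\<lambda>y. (T y $ i - m $ i) * (T y $ j - m $ j)) \<in> borel_measurable lam" by measurable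
    qed (use cb in auto)
    then show ?thesis by (simp add: mult.commute)
  qed
  show ?thesis unfolding m_def[symmetric] V_def[symmetric]
  proof (rule iffD2[OF vec_eq_iff], rule allI)
    fix i
    have "(CovB b *v h) $ i = (\<Sum>j\<in>UNIV. (\<integral>y. (T y $ i - m $ i) * (T y $ j - m $ j) * dens lam T b y \<partial>lam) * h $ j)"
      unfolding CovB_def m_def by (simp add: matrix_vector_mult_def)
    also have "\<dots> = (\<Sum>j\<in>UNIV. (\<integral>y. (T y $ i - m $ i) * (T y $ j - m $ j) * dens lam T b y * h $ j \<partial>lam))"
      by simp
    also have "\<dots> = (\<integral>y. (\<Sum>j\<in>UNIV. (T y $ i - m $ i) * (T y $ j - m $ j) * dens lam T b y * h $ j) \<partial>lam)"
      by (rule Bochner_Integration.integral_sum[symmetric]) (use ci in auto)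
    also have "\<dots> = (\<integral>y. V y $ i \<partial>lam)"
      unfolding V_def
      by (rule Bochner_Integration.integral_cong) (auto simp: inner_vec_def sum_distrib_left sum_distrib_right mult_ac)
    also have "\<dots> = (\<integral>y. V y \<bullet> axis i 1 \<partial>lam)" by (simp add: cart_eq_inner_axis)
    also have "\<dots> = (\<integral>y. V y \<partial>lam) \<bullet> axis i 1" by (rule integral_inner_left) (use Vi in auto)
    also have "\<dots> = (\<integral>y. V y \<partial>lam) $ i" by (simp add: cart_eq_inner_axis)
    finally show "(CovB b *v h) $ i = (\<integral>y. V y \<partial>lam) $ i" .
  qed
qed


lemma Z_deriv: assumes b: "b \<in> interior NS"
  shows "(Zf lam T has_derivative (\<lambda>d. \<integral>y. (d \<bullet> T y) * exp (b \<bullet> T y) \<partial>lam)) (at b)"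
proof -
  have "((\<lambda>\<beta>. \<integral>y. exp (\<beta> \<bullet> T y) *\<^sub>R (1::real) \<partial>lam) has_derivative
        (\<lambda>d. \<integral>y. ((d \<bullet> T y) * exp (b \<bullet> T y)) *\<^sub>R (1::real) \<partial>lam)) (at b)"
    by (rule DUI[OF b, where a=1]) auto
  then show ?thesis by (simp add: Zf_def[abs_def])
qed

lemma meanT_eq: "meanT lam T \<beta> = (1 / Zf lam T \<beta>) *\<^sub>R (\<integral>y. exp (\<beta> \<bullet> T y) *\<^sub>R T y \<partial>lam)"
proof -
  have "meanT lam T \<beta> = (\<integral>y. (1 / Zf lam T \<beta>) *\<^sub>R (exp (\<beta> \<bullet> T y) *\<^sub>R T y) \<partial>lam)"
    unfolding meanT_def by (rule Bochner_Integration.integral_cong) (auto simp: dens_def)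
  then show ?thesis by (simp only: integral_scaleR_right)
qed

lemma int_exp: "b \<in> NS \<Longrightarrow> integrable lam (\<lambda>y. exp (b \<bullet> T y))"
  by (simp add: nat_space_def)

lemma int_expT: "b \<in> interior NS \<Longrightarrow> integrable lam (\<lambda>y. exp (b \<bullet> T y) *\<^sub>R T y)"
  by (rule int_poly[where ca=0 and cb=1 and cc=0]) auto

lemma meanT_centered:
  assumes \<beta>: "\<beta> \<in> interior NS"
  shows "meanT lam T \<beta> = m + (1 / Zf lam T \<beta>) *\<^sub>R (\<integral>y. exp (\<beta> \<bullet> T y) *\<^sub>R (T y - m) \<partial>lam)"
proof -
  have z: "Zf lam T \<beta> > 0" using Z_pos[OF interior_NS[OF \<beta>]] .
  have i1: "integrable lam (\<lambda>y. exp (\<beta> \<bullet> T y) *\<^sub>R T y)" using int_expT[OF \<beta>] .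
  have i2: "integrable lam (\<lambda>y. exp (\<beta> \<bullet> T y) *\<^sub>R m)"
    using int_exp[OF interior_NS[OF \<beta>]] by (intro integrable_scaleR_left)
  have "(\<integral>y. exp (\<beta> \<bullet> T y) *\<^sub>R (T y - m) \<partial>lam)
      = (\<integral>y. exp (\<beta> \<bullet> T y) *\<^sub>R T y \<partial>lam) - (\<integral>y. exp (\<beta> \<bullet> T y) *\<^sub>R m \<partial>lam)"
    unfolding scaleR_diff_right by (rule Bochner_Integration.integral_diff[OF i1 i2])
  also have "(\<integral>y. exp (\<beta> \<bullet> T y) *\<^sub>R m \<partial>lam) = Zf lam T \<beta> *\<^sub>R m"
    unfolding Zf_def by (rule integral_scaleR_left) (use int_exp[OF interior_NS[OF \<beta>]] in simp)
  finally have e: "(\<integral>y. exp (\<beta> \<bullet> T y) *\<^sub>R (T y - m) \<partial>lam) = (\<integral>y. exp (\<beta> \<bullet> T y) *\<^sub>R T y \<partial>lam) - Zf lam T \<beta> *\<^sub>R m" .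
  have "m + (1 / Zf lam T \<beta>) *\<^sub>R ((\<integral>y. exp (\<beta> \<bullet> T y) *\<^sub>R T y \<partial>lam) - Zf lam T \<beta> *\<^sub>R m)
      = (1 / Zf lam T \<beta>) *\<^sub>R (\<integral>y. exp (\<beta> \<bullet> T y) *\<^sub>R T y \<partial>lam)"
    using z by (simp add: scaleR_diff_right)
  then show ?thesis unfolding e meanT_eq[of \<beta>] by simp
qed

lemma CovB_sym: "transpose (CovB b) = CovB b"
  unfolding CovB_def transpose_def by (simp add: vec_eq_iff mult_ac)

lemma meanT_deriv:
  assumes b: "b \<in> interior NS"
  shows "(meanT lam T has_derivative (\<lambda>h. CovB b *v h)) (at b)"
proof -
  define m where "m = meanT lam T b"
  define Z0 where "Z0 = Zf lam T b"
  have z: "Z0 > 0" unfolding Z0_def using Z_pos[OF interior_NS[OF b]] .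
  define Nc where "Nc \<beta> = (\<integral>y. exp (\<beta> \<bullet> T y) *\<^sub>R (T y - m) \<partial>lam)" for \<beta>
  define DN where "DN d = (\<integral>y. ((d \<bullet> T y) * exp (b \<bullet> T y)) *\<^sub>R (T y - m) \<partial>lam)" for d
  define DZ where "DZ d = (\<integral>y. (d \<bullet> T y) * exp (b \<bullet> T y) \<partial>lam)" for d
  have dN: "(Nc has_derivative DN) (at b)"
    unfolding Nc_def[abs_def] DN_def[abs_def]
    by (rule DUI[OF b, where a="norm m"]) (auto intro: nT_bound)
  have dZ: "(Zf lam T has_derivative DZ) (at b)" unfolding DZ_def[abs_def] by (rule Z_deriv[OF b])
  have Nb: "Nc b = 0"
  proof -
    have e: "m = m + (1 / Z0) *\<^sub>R Nc b"
      using meanT_centered[OF b, of m] unfolding m_def[symmetric] Z0_def[symmetric] Nc_def[symmetric] .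
    have "(1 / Z0) *\<^sub>R Nc b = 0" using e by (metis add.right_neutral add_left_cancel)
    then show ?thesis using z by simp
  qed
  have dI: "((\<lambda>\<beta>. inverse (Zf lam T \<beta>)) has_derivative (\<lambda>h. - (inverse (Zf lam T b) * DZ h * inverse (Zf lam T b)))) (at b)"
    by (rule Deriv.has_derivative_inverse[OF _ dZ]) (use z in \<open>simp add: Z0_def\<close>)
  have dg: "((\<lambda>\<beta>. m + inverse (Zf lam T \<beta>) *\<^sub>R Nc \<beta>) has_derivative
      (\<lambda>h. 0 + (inverse (Zf lam T b) *\<^sub>R DN h + (- (inverse (Zf lam T b) * DZ h * inverse (Zf lam T b))) *\<^sub>R Nc b))) (at b)"
    by (intro has_derivative_add has_derivative_const has_derivative_scaleR dI dN)
  have dg': "((\<lambda>\<beta>. m + inverse (Zf lam T \<beta>) *\<^sub>R Nc \<beta>) has_derivative (\<lambda>h. (1 / Z0) *\<^sub>R DN h)) (at b)"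
    using dg unfolding Nb Z0_def by (simp add: divide_inverse)
  have dm: "(meanT lam T has_derivative (\<lambda>h. (1 / Z0) *\<^sub>R DN h)) (at b)"
  proof (rule has_derivative_transform_within_open[OF dg' open_interior b])
    fix x assume "x \<in> interior NS"
    then show "m + inverse (Zf lam T x) *\<^sub>R Nc x = meanT lam T x"
      using meanT_centered[of x m] unfolding Nc_def by (simp add: divide_inverse)
  qed
  have eq: "(1 / Z0) *\<^sub>R DN h = CovB b *v h" for h
  proof -
    have i1: "integrable lam (\<lambda>y. (dens lam T b y * (h \<bullet> (T y - m))) *\<^sub>R (T y - m))"
    proof -
      have "integrable lam (\<lambda>y. dens lam T b y *\<^sub>R ((h \<bullet> (T y - m)) *\<^sub>R (T y - m)))"
      proof (rule int_dens[OF b, where ca="norm h * (norm m)^2" and cb="2 * norm h * norm m" and cc="norm h"])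
        show "(\<lambda>y. (h \<bullet> (T y - m)) *\<^sub>R (T y - m)) \<in> borel_measurable lam" by measurable
        fix y
        have hb: "\<bar>h \<bullet> (T y - m)\<bar> \<le> norm h * (norm m + norm (T y))"
          using Cauchy_Schwarz_ineq2[of h "T y - m"] nT_bound[of y m]
          by (meson mult_left_mono norm_ge_zero order_trans)
        have "norm ((h \<bullet> (T y - m)) *\<^sub>R (T y - m)) = \<bar>h \<bullet> (T y - m)\<bar> * norm (T y - m)" by simp
        also have "\<dots> \<le> (norm h * (norm m + norm (T y))) * (norm m + norm (T y))"
          by (intro mult_mono hb nT_bound) auto
        also have "\<dots> = norm h * (norm m)\<^sup>2 + 2 * norm h * norm m * norm (T y) + norm h * (norm (T y))\<^sup>2"
          by (simp add: algebra_simps power2_eq_square)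
        finally show "norm ((h \<bullet> (T y - m)) *\<^sub>R (T y - m)) \<le> norm h * (norm m)\<^sup>2 + 2 * norm h * norm m * norm (T y) + norm h * (norm (T y))\<^sup>2" .
      qed
      then show ?thesis by simp
    qed
    have i2: "integrable lam (\<lambda>y. (dens lam T b y * (h \<bullet> m)) *\<^sub>R (T y - m))"
    proof -
      have "integrable lam (\<lambda>y. dens lam T b y *\<^sub>R ((h \<bullet> m) *\<^sub>R (T y - m)))"
      proof (rule int_dens[OF b, where ca="\<bar>h \<bullet> m\<bar> * norm m" and cb="\<bar>h \<bullet> m\<bar>" and cc="0"])
        show "(\<lambda>y. (h \<bullet> m) *\<^sub>R (T y - m)) \<in> borel_measurable lam" by measurable
        fix y
        have "norm ((h \<bullet> m) *\<^sub>R (T y - m)) = \<bar>h \<bullet> m\<bar> * norm (T y - m)" by simp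
        also have "\<dots> \<le> \<bar>h \<bullet> m\<bar> * (norm m + norm (T y))"
          by (intro mult_left_mono nT_bound) auto
        finally show "norm ((h \<bullet> m) *\<^sub>R (T y - m)) \<le> \<bar>h \<bullet> m\<bar> * norm m + \<bar>h \<bullet> m\<bar> * norm (T y) + 0 * (norm (T y))\<^sup>2"
          by (simp add: algebra_simps)
      qed
      then show ?thesis by simp
    qed
    have "(1 / Z0) *\<^sub>R DN h = (\<integral>y. (1 / Z0) *\<^sub>R (((h \<bullet> T y) * exp (b \<bullet> T y)) *\<^sub>R (T y - m)) \<partial>lam)"
      unfolding DN_def by (rule integral_scaleR_right[symmetric])
    also have "\<dots> = (\<integral>y. (dens lam T b y * (h \<bullet> (T y - m))) *\<^sub>R (T y - m) + (dens lam T b y * (h \<bullet> m)) *\<^sub>R (T y - m) \<partial>lam)"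
    proof (rule Bochner_Integration.integral_cong[OF refl])
      fix y
      have c1: "dens lam T b y * (h \<bullet> (T y - m)) + dens lam T b y * (h \<bullet> m) = dens lam T b y * (h \<bullet> T y)"
        by (simp add: inner_diff_right algebra_simps)
      have c2: "dens lam T b y * (h \<bullet> T y) = (1 / Z0) * ((h \<bullet> T y) * exp (b \<bullet> T y))"
        unfolding dens_def Z0_def by simp
      note c = trans[OF c1 c2]
      show "(1 / Z0) *\<^sub>R (((h \<bullet> T y) * exp (b \<bullet> T y)) *\<^sub>R (T y - m))
          = (dens lam T b y * (h \<bullet> (T y - m))) *\<^sub>R (T y - m) + (dens lam T b y * (h \<bullet> m)) *\<^sub>R (T y - m)"
        by (simp only: scaleR_add_left[symmetric] c scaleR_scaleR)
    qed
    also have "\<dots> = (\<integral>y. (dens lam T b y * (h \<bullet> (T y - m))) *\<^sub>R (T y - m) \<partial>lam) + (\<integral>y. (dens lam T b y * (h \<bullet> m)) *\<^sub>R (T y - m) \<partial>lam)"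
      by (rule Bochner_Integration.integral_add[OF i1 i2])
    also have "(\<integral>y. (dens lam T b y * (h \<bullet> m)) *\<^sub>R (T y - m) \<partial>lam) = (\<integral>y. ((h \<bullet> m) / Z0) *\<^sub>R (exp (b \<bullet> T y) *\<^sub>R (T y - m)) \<partial>lam)"
      by (rule Bochner_Integration.integral_cong) (auto simp: dens_def Z0_def)
    also have "\<dots> = ((h \<bullet> m) / Z0) *\<^sub>R Nc b" unfolding Nc_def by (rule integral_scaleR_right)
    also have "\<dots> = 0" by (simp add: Nb)
    finally show ?thesis using covv[OF b, of h] unfolding m_def by simp
  qed
  show ?thesis using dm unfolding eq .
qed

lemma CovB_quad:
  assumes b: "b \<in> interior NS"
  shows "a \<bullet> (CovB b *v h) = (\<integral>y. dens lam T b y * (h \<bullet> (T y - meanT lam T b)) * (a \<bullet> (T y - meanT lam T b)) \<partial>lam)"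
proof -
  define m where "m = meanT lam T b"
  have i1: "integrable lam (\<lambda>y. (dens lam T b y * (h \<bullet> (T y - m))) *\<^sub>R (T y - m))"
  proof -
    have "integrable lam (\<lambda>y. dens lam T b y *\<^sub>R ((h \<bullet> (T y - m)) *\<^sub>R (T y - m)))"
    proof (rule int_dens[OF b, where ca="norm h * (norm m)^2" and cb="2 * norm h * norm m" and cc="norm h"])
      show "(\<lambda>y. (h \<bullet> (T y - m)) *\<^sub>R (T y - m)) \<in> borel_measurable lam" by measurable
      fix y
      have hb: "\<bar>h \<bullet> (T y - m)\<bar> \<le> norm h * (norm m + norm (T y))"
        using Cauchy_Schwarz_ineq2[of h "T y - m"] nT_bound[of y m]
        by (meson mult_left_mono norm_ge_zero order_trans)
      have "norm ((h \<bullet> (T y - m)) *\<^sub>R (T y - m)) = \<bar>h \<bullet> (T y - m)\<bar> * norm (T y - m)" by simp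
      also have "\<dots> \<le> (norm h * (norm m + norm (T y))) * (norm m + norm (T y))"
        by (intro mult_mono hb nT_bound) auto
      also have "\<dots> = norm h * (norm m)\<^sup>2 + 2 * norm h * norm m * norm (T y) + norm h * (norm (T y))\<^sup>2"
        by (simp add: algebra_simps power2_eq_square)
      finally show "norm ((h \<bullet> (T y - m)) *\<^sub>R (T y - m)) \<le> norm h * (norm m)\<^sup>2 + 2 * norm h * norm m * norm (T y) + norm h * (norm (T y))\<^sup>2" .
    qed
    then show ?thesis by simp
  qed
  have "a \<bullet> (CovB b *v h) = (\<integral>y. a \<bullet> ((dens lam T b y * (h \<bullet> (T y - m))) *\<^sub>R (T y - m)) \<partial>lam)"
    unfolding covv[OF b] m_def[symmetric] by (rule integral_inner_right[symmetric]) (use i1 in simp)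
  also have "\<dots> = (\<integral>y. dens lam T b y * (h \<bullet> (T y - m)) * (a \<bullet> (T y - m)) \<partial>lam)"
    by simp
  finally show ?thesis unfolding m_def .
qed

lemma CovB_spd:
  assumes b: "b \<in> interior NS"
  shows "sym_pos_def (CovB b)"
  unfolding sym_pos_def_def
proof (intro conjI allI impI CovB_sym)
  fix h :: "real^'k" assume h: "h \<noteq> 0"
  define m where "m = meanT lam T b"
  have q: "h \<bullet> (CovB b *v h) = (\<integral>y. dens lam T b y * (h \<bullet> (T y - m))\<^sup>2 \<partial>lam)"
    unfolding CovB_quad[OF b] m_def by (simp add: power2_eq_square mult_ac)
  have i: "integrable lam (\<lambda>y. dens lam T b y * (h \<bullet> (T y - m))\<^sup>2)"
  proof -
    have "integrable lam (\<lambda>y. dens lam T b y *\<^sub>R (h \<bullet> (T y - m))\<^sup>2)"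
    proof (rule int_dens[OF b, where ca="(norm h)\<^sup>2 * (norm m)^2" and cb="2 * (norm h)\<^sup>2 * norm m" and cc="(norm h)\<^sup>2"])
      show "(\<lambda>y. (h \<bullet> (T y - m))\<^sup>2) \<in> borel_measurable lam" by measurable
      fix y
      have hb: "\<bar>h \<bullet> (T y - m)\<bar> \<le> norm h * (norm m + norm (T y))"
        using Cauchy_Schwarz_ineq2[of h "T y - m"] nT_bound[of y m]
        by (meson mult_left_mono norm_ge_zero order_trans)
      have "norm ((h \<bullet> (T y - m))\<^sup>2) = \<bar>h \<bullet> (T y - m)\<bar> * \<bar>h \<bullet> (T y - m)\<bar>" by (simp add: power2_eq_square abs_mult)
      also have "\<dots> \<le> (norm h * (norm m + norm (T y))) * (norm h * (norm m + norm (T y)))"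
        by (intro mult_mono hb) auto
      also have "\<dots> = (norm h)\<^sup>2 * (norm m)\<^sup>2 + 2 * (norm h)\<^sup>2 * norm m * norm (T y) + (norm h)\<^sup>2 * (norm (T y))\<^sup>2"
        by (simp add: algebra_simps power2_eq_square)
      finally show "norm ((h \<bullet> (T y - m))\<^sup>2) \<le> (norm h)\<^sup>2 * (norm m)\<^sup>2 + 2 * (norm h)\<^sup>2 * norm m * norm (T y) + (norm h)\<^sup>2 * (norm (T y))\<^sup>2" .
    qed
    then show ?thesis by simp
  qed
  have dp: "0 < dens lam T b y" for y using dens_pos[OF interior_NS[OF b]] .
  have nn: "AE y in lam. 0 \<le> dens lam T b y * (h \<bullet> (T y - m))\<^sup>2"
  proof (rule AE_I2)
    fix y show "0 \<le> dens lam T b y * (h \<bullet> (T y - m))\<^sup>2" using dp[of y] by simp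
  qed
  have "h \<bullet> (CovB b *v h) \<ge> 0" unfolding q by (rule integral_nonneg_AE[OF nn])
  moreover have "h \<bullet> (CovB b *v h) \<noteq> 0"
  proof
    assume "h \<bullet> (CovB b *v h) = 0"
    then have "AE y in lam. dens lam T b y * (h \<bullet> (T y - m))\<^sup>2 = 0"
      using integral_nonneg_eq_0_iff_AE[OF i nn] q by simp
    then have "AE y in lam. h \<bullet> T y = h \<bullet> m"
    proof (rule AE_mp)
      show "AE y in lam. dens lam T b y * (h \<bullet> (T y - m))\<^sup>2 = 0 \<longrightarrow> h \<bullet> T y = h \<bullet> m"
      proof (rule AE_I2, rule impI)
        fix y assume "dens lam T b y * (h \<bullet> (T y - m))\<^sup>2 = 0"
        then have "h \<bullet> (T y - m) = 0" using dp[of y] by simp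
        then show "h \<bullet> T y = h \<bullet> m" by (simp add: inner_diff_right)
      qed
    qed
    with ef have "h = 0" unfolding expfam_stats_def by blast
    with h show False by simp
  qed
  ultimately show "h \<bullet> (CovB b *v h) > 0" by simp
qed


end


context ef_loc begin

lemma NS_convex: "convex NS"
  unfolding convex_def
proof (intro ballI allI impI)
  fix x y :: "real^'k" and u v :: real
  assume x: "x \<in> NS" and y: "y \<in> NS" and uv: "0 \<le> u" "0 \<le> v" "u + v = 1"
  show "u *\<^sub>R x + v *\<^sub>R y \<in> NS" unfolding nat_space_def
  proof (rule CollectI, rule Bochner_Integration.integrable_bound)
    show "integrable lam (\<lambda>z. exp (x \<bullet> T z) + exp (y \<bullet> T z))"
      using int_exp[OF x] int_exp[OF y] by (rule Bochner_Integration.integrable_add)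
    show "(\<lambda>z. exp ((u *\<^sub>R x + v *\<^sub>R y) \<bullet> T z)) \<in> borel_measurable lam" by measurable
    show "AE z in lam. norm (exp ((u *\<^sub>R x + v *\<^sub>R y) \<bullet> T z)) \<le> norm (exp (x \<bullet> T z) + exp (y \<bullet> T z))"
    proof (rule AE_I2)
      fix z
      define M where "M = max (x \<bullet> T z) (y \<bullet> T z)"
      have "(u *\<^sub>R x + v *\<^sub>R y) \<bullet> T z = u * (x \<bullet> T z) + v * (y \<bullet> T z)" by (simp add: inner_add_left)
      also have "\<dots> \<le> u * M + v * M" unfolding M_def using uv by (intro add_mono mult_left_mono) auto
      also have "\<dots> = M" using uv by (simp add: distrib_right[symmetric])
      finally have "exp ((u *\<^sub>R x + v *\<^sub>R y) \<bullet> T z) \<le> exp M" by simp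
      also have "\<dots> \<le> exp (x \<bullet> T z) + exp (y \<bullet> T z)" unfolding M_def by (auto simp: max_def)
      finally show "norm (exp ((u *\<^sub>R x + v *\<^sub>R y) \<bullet> T z)) \<le> norm (exp (x \<bullet> T z) + exp (y \<bullet> T z))"
        by simp
    qed
  qed
qed

lemma meanT_inj:
  assumes b1: "b1 \<in> interior NS" and b2: "b2 \<in> interior NS" and eq: "meanT lam T b1 = meanT lam T b2"
  shows "b1 = b2"
proof (rule ccontr)
  assume ne: "b1 \<noteq> b2"
  define d where "d = b2 - b1"
  have d0: "d \<noteq> 0" using ne unfolding d_def by simp
  define p where "p s = b1 + s *\<^sub>R d" for s :: real
  have cvx: "convex (interior NS)" by (rule convex_interior[OF NS_convex])
  have pin: "p s \<in> interior NS" if "0 \<le> s" "s \<le> 1" for s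
  proof -
    have "(1 - s) *\<^sub>R b1 + s *\<^sub>R b2 \<in> interior NS"
      using cvx b1 b2 that unfolding convex_def by auto
    moreover have "(1 - s) *\<^sub>R b1 + s *\<^sub>R b2 = p s" unfolding p_def d_def by (simp add: algebra_simps)
    ultimately show ?thesis by simp
  qed
  define \<phi> where "\<phi> s = meanT lam T (p s) \<bullet> d" for s
  have dphi: "DERIV \<phi> s :> d \<bullet> (CovB (p s) *v d)" if "0 \<le> s" "s \<le> 1" for s
  proof -
    have dp: "(p has_derivative (\<lambda>t. t *\<^sub>R d)) (at s)"
      unfolding p_def[abs_def] by (auto intro!: derivative_eq_intros)
    have dm: "((\<lambda>s. meanT lam T (p s)) has_derivative (\<lambda>t. CovB (p s) *v (t *\<^sub>R d))) (at s)"
      by (rule has_derivative_compose[OF dp meanT_deriv[OF pin[OF that]]])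
    have "(\<phi> has_derivative (\<lambda>t. (CovB (p s) *v (t *\<^sub>R d)) \<bullet> d)) (at s)"
      unfolding \<phi>_def[abs_def]
      by (rule bounded_linear.has_derivative[OF bounded_linear_inner_left dm])
    moreover have "(\<lambda>t. (CovB (p s) *v (t *\<^sub>R d)) \<bullet> d) = (*) (d \<bullet> (CovB (p s) *v d))"
      by (auto simp: fun_eq_iff matrix_vector_mult_scaleR inner_commute)
    ultimately show ?thesis unfolding has_field_derivative_def by simp
  qed
  have cont: "continuous_on {0..1} \<phi>"
    using dphi by (intro continuous_at_imp_continuous_on ballI) (auto intro: DERIV_isCont)
  have dif: "\<phi> differentiable (at x)" if "0 < x" "x < 1" for x
    using dphi[of x] that by (auto simp: real_differentiable_def)
  have "\<exists>l z. 0 < z \<and> z < 1 \<and> DERIV \<phi> z :> l \<and> \<phi> 1 - \<phi> 0 = (1 - 0) * l"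
    by (rule MVT) (use cont dif in auto)
  then obtain l z where z: "0 < z" "z < 1" and dz: "DERIV \<phi> z :> l" and mv: "\<phi> 1 - \<phi> 0 = (1 - 0) * l"
    by blast
  have l: "l = d \<bullet> (CovB (p z) *v d)" using DERIV_unique[OF dz dphi[of z]] z by simp
  have "l > 0" unfolding l using CovB_spd[OF pin[of z]] z d0 unfolding sym_pos_def_def by auto
  moreover have "\<phi> 1 = \<phi> 0" unfolding \<phi>_def p_def d_def using eq by simp
  ultimately show False using mv by simp
qed

lemma natpar_meanT: assumes "b \<in> interior NS" shows "natpar lam T (meanT lam T b) = b"
  unfolding natpar_def
  by (rule the_equality) (use assms meanT_inj in auto)

lemma natpar_props:
  assumes "yh \<in> mean_dom lam T"
  shows "natpar lam T yh \<in> interior NS" "meanT lam T (natpar lam T yh) = yh"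
proof -
  obtain b where b: "b \<in> interior NS" "yh = meanT lam T b" using assms unfolding mean_dom_def by auto
  then show "natpar lam T yh \<in> interior NS" "meanT lam T (natpar lam T yh) = yh"
    using natpar_meanT[OF b(1)] by auto
qed

lemma natpar_deriv:
  assumes yh: "yh \<in> mean_dom lam T"
  shows "(natpar lam T has_derivative (\<lambda>v. matrix_inv (CovB (natpar lam T yh)) *v v)) (at yh)"
proof -
  define b where "b = natpar lam T yh"
  have bin: "b \<in> interior NS" and mb: "meanT lam T b = yh" using natpar_props[OF yh] unfolding b_def by auto
  have inv: "invertible (CovB b)" by (rule spd_invertible[OF CovB_spd[OF bin]])
  have "(natpar lam T has_derivative (\<lambda>v. matrix_inv (CovB b) *v v)) (at (meanT lam T b))"
  proof (rule has_derivative_inverse_strong[OF open_interior bin])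
    show "continuous_on (interior NS) (meanT lam T)"
      by (intro continuous_at_imp_continuous_on ballI has_derivative_continuous[OF meanT_deriv])
    show "\<And>x. x \<in> interior NS \<Longrightarrow> natpar lam T (meanT lam T x) = x" by (rule natpar_meanT)
    show "(meanT lam T has_derivative (\<lambda>h. CovB b *v h)) (at b)" by (rule meanT_deriv[OF bin])
    show "(\<lambda>h. CovB b *v h) \<circ> (\<lambda>v. matrix_inv (CovB b) *v v) = id"
      using inv_props[OF inv] by (auto simp: fun_eq_iff matrix_vector_mul_assoc)
  qed
  then show ?thesis using mb unfolding b_def by simp
qed

lemma lnp_deriv:
  assumes yh: "yh \<in> mean_dom lam T"
  shows "((\<lambda>z. ln (pobs lam T z y0)) has_derivative
          (\<lambda>v. (T y0 - yh) \<bullet> (matrix_inv (CovB (natpar lam T yh)) *v v))) (at yh)"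
proof -
  define b where "b = natpar lam T yh"
  have bin: "b \<in> interior NS" and mb: "meanT lam T b = yh" using natpar_props[OF yh] unfolding b_def by auto
  have z: "Zf lam T b > 0" using Z_pos[OF interior_NS[OF bin]] .
  define DZ where "DZ d = (\<integral>y. (d \<bullet> T y) * exp (b \<bullet> T y) \<partial>lam)" for d
  have dZ: "(Zf lam T has_derivative DZ) (at b)" unfolding DZ_def[abs_def] by (rule Z_deriv[OF bin])
  have dlnZ: "((\<lambda>\<beta>. ln (Zf lam T \<beta>)) has_derivative (\<lambda>d. DZ d * inverse (Zf lam T b))) (at b)"
    by (rule has_derivative_ln[OF z dZ])
  have dlin: "((\<lambda>\<beta>. \<beta> \<bullet> T y0) has_derivative (\<lambda>d. d \<bullet> T y0)) (at b)"
    by (rule bounded_linear.has_derivative[OF bounded_linear_inner_left has_derivative_ident])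
  have DZeq: "DZ d * inverse (Zf lam T b) = d \<bullet> yh" for d
  proof -
    have "d \<bullet> yh = (1 / Zf lam T b) * (d \<bullet> (\<integral>y. exp (b \<bullet> T y) *\<^sub>R T y \<partial>lam))"
      unfolding mb[symmetric] meanT_eq by simp
    also have "d \<bullet> (\<integral>y. exp (b \<bullet> T y) *\<^sub>R T y \<partial>lam) = (\<integral>y. d \<bullet> (exp (b \<bullet> T y) *\<^sub>R T y) \<partial>lam)"
      by (rule integral_inner_right[symmetric]) (use int_expT[OF bin] in simp)
    also have "\<dots> = DZ d" unfolding DZ_def by (simp add: mult.commute)
    finally show ?thesis by (simp add: divide_inverse mult.commute)
  qed
  have dG0: "((\<lambda>\<beta>. \<beta> \<bullet> T y0 - ln (Zf lam T \<beta>)) has_derivative (\<lambda>d. d \<bullet> T y0 - d \<bullet> yh)) (at b)"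
    using has_derivative_diff[OF dlin dlnZ] unfolding DZeq .
  have dG: "((\<lambda>\<beta>. ln (dens lam T \<beta> y0)) has_derivative (\<lambda>d. d \<bullet> T y0 - d \<bullet> yh)) (at b)"
  proof (rule has_derivative_transform_within_open[OF dG0 open_interior bin])
    fix x assume "x \<in> interior NS"
    then have "Zf lam T x > 0" using Z_pos[OF interior_NS] by blast
    then show "x \<bullet> T y0 - ln (Zf lam T x) = ln (dens lam T x y0)"
      unfolding dens_def by (simp add: ln_div)
  qed
  have "((\<lambda>z. ln (dens lam T (natpar lam T z) y0)) has_derivative
     (\<lambda>v. (matrix_inv (CovB b) *v v) \<bullet> T y0 - (matrix_inv (CovB b) *v v) \<bullet> yh)) (at yh)"
    using has_derivative_compose[OF natpar_deriv[OF yh] dG[unfolded b_def]] unfolding b_def .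
  moreover have "(\<lambda>v. (matrix_inv (CovB b) *v v) \<bullet> T y0 - (matrix_inv (CovB b) *v v) \<bullet> yh)
     = (\<lambda>v. (T y0 - yh) \<bullet> (matrix_inv (CovB b) *v v))"
    by (auto simp: fun_eq_iff inner_diff_left inner_diff_right inner_commute)
  ultimately show ?thesis unfolding pobs_def b_def by simp
qed

lemma covT_eq: assumes "yh \<in> mean_dom lam T" shows "covT lam T yh = CovB (natpar lam T yh)"
  unfolding covT_def CovB_def pobs_def using natpar_props(2)[OF assms] by simp

lemma covT_spd: assumes "yh \<in> mean_dom lam T" shows "sym_pos_def (covT lam T yh)"
  unfolding covT_eq[OF assms] by (rule CovB_spd[OF natpar_props(1)[OF assms]])

lemma fisher_eq:
  assumes yh: "yh \<in> mean_dom lam T"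
  shows "(\<integral>y. ((T y - yh) \<bullet> a) * ((T y - yh) \<bullet> c) * pobs lam T yh y \<partial>lam) = a \<bullet> (covT lam T yh *v c)"
proof -
  define b where "b = natpar lam T yh"
  have bin: "b \<in> interior NS" and mb: "meanT lam T b = yh" using natpar_props[OF yh] unfolding b_def by auto
  show ?thesis
    unfolding covT_eq[OF yh] b_def[symmetric] CovB_quad[OF bin] mb
    by (rule Bochner_Integration.integral_cong) (auto simp: pobs_def b_def inner_commute mult_ac)
qed

end


lemma score_deriv:
  fixes h :: "real^'n \<Rightarrow> 'u::euclidean_space \<Rightarrow> real^'k" and lam :: "'y measure"
  assumes ef: "expfam_stats lam T" and sh: "smooth_map (\<lambda>(s, v). h s v)" and dom: "h \<theta>0 uu \<in> mean_dom lam T"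
  shows "frechet_derivative (\<lambda>\<theta>. ln (pobs lam T (h \<theta> uu) y)) (at \<theta>0)
       = (\<lambda>d. (T y - h \<theta>0 uu) \<bullet> (matrix_inv (covT lam T (h \<theta>0 uu)) *v (jac (\<lambda>x. h x uu) \<theta>0 *v d)))"
proof -
  interpret E: ef_loc lam T by (rule ef_loc.intro[OF ef])
  have dh: "((\<lambda>\<theta>. h \<theta> uu) has_derivative (\<lambda>d. jac (\<lambda>x. h x uu) \<theta>0 *v d)) (at \<theta>0)"
    by (rule jac_deriv[OF partial_diff[OF sh]])
  have dl: "((\<lambda>z. ln (pobs lam T z y)) has_derivative
      (\<lambda>v. (T y - h \<theta>0 uu) \<bullet> (matrix_inv (covT lam T (h \<theta>0 uu)) *v v))) (at (h \<theta>0 uu))"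
    using E.lnp_deriv[OF dom, of y] unfolding E.covT_eq[OF dom] .
  have "((\<lambda>\<theta>. ln (pobs lam T (h \<theta> uu) y)) has_derivative
     (\<lambda>d. (T y - h \<theta>0 uu) \<bullet> (matrix_inv (covT lam T (h \<theta>0 uu)) *v (jac (\<lambda>x. h x uu) \<theta>0 *v d)))) (at \<theta>0)"
    by (rule has_derivative_compose[OF dh dl])
  then show ?thesis by (rule frechet_derivative_at[symmetric])
qed

theorem theorem5:
  fixes f :: "real^'n \<Rightarrow> 'u::euclidean_space \<Rightarrow> real^'n"
    and h :: "real^'n \<Rightarrow> 'u \<Rightarrow> real^'k"
    and u :: "nat \<Rightarrow> 'u"
    and lam :: "'y measure"
    and T :: "'y \<Rightarrow> real^'k"
    and y :: "nat \<Rightarrow> 'y"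
    and \<alpha> \<eta> \<gamma> :: "nat \<Rightarrow> real"
    and s0 :: "real^'n"
    and P0 J0 :: "real^'n^'n"
    and ss0 :: "nat \<Rightarrow> real^'n"
  assumes smooth_f: "smooth_map (\<lambda>(s, v). f s v)"
    and smooth_h: "smooth_map (\<lambda>(s, v). h s v)"
    and diffeo_f: "\<forall>t\<ge>1. diffeo (\<lambda>s. f s (u t))"
    and expfam: "expfam_stats lam T"
    and h_dom: "\<forall>s v. h s v \<in> mean_dom lam T"
    and alpha_nonneg: "\<forall>t. \<alpha> t \<ge> 0"
    and P0_spd: "sym_pos_def P0"
    and J0_spd: "sym_pos_def J0"
    and ss0_traj: "ss0 \<in> traj f u"
    and ss0_init: "ss0 0 = s0"
    and P0_J0: "P0 = \<eta> 0 *\<^sub>R matrix_inv J0"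
    and gamma_eta: "\<forall>t\<ge>1. \<gamma> t = \<eta> t"
    and eta_rec: "\<forall>t\<ge>1. 1 / \<eta> t = (1 / (1 + \<alpha> t)) * (1 / \<eta> (t - 1)) + 1"
  shows "\<forall>t. Phi t (fst (ongd f h u lam T y \<eta> \<gamma> ss0 J0 t)) = fst (ekf f h u lam T y \<alpha> s0 P0 t)
            \<and> snd (ekf f h u lam T y \<alpha> s0 P0 t)
                = \<eta> t *\<^sub>R matrix_inv (coord_tensor f u t (fst (ongd f h u lam T y \<eta> \<gamma> ss0 J0 t))
                                        (snd (ongd f h u lam T y \<eta> \<gamma> ss0 J0 t)))"
proof -
  interpret E: ef_loc lam T by (rule ef_loc.intro[OF expfam])
  define Og where "Og t = ongd f h u lam T y \<eta> \<gamma> ss0 J0 t" for t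
  define Ke where "Ke t = ekf f h u lam T y \<alpha> s0 P0 t" for t
  define Inv where "Inv t \<longleftrightarrow> fst (Og t) \<in> traj f u \<and> Phi t (fst (Og t)) = fst (Ke t) \<and> \<eta> t > 0 \<and>
        (\<exists>J. snd (Og t) = tensor_of_coord t J \<and> sym_pos_def J \<and> snd (Ke t) = \<eta> t *\<^sub>R matrix_inv J)" for t
  have eta0: "\<eta> 0 > 0"
  proof -
    define e where "e = axis (undefined::'n) (1::real)"
    have e0: "e \<noteq> 0" unfolding e_def by (simp add: axis_eq_0_iff)
    have "0 < e \<bullet> (P0 *v e)" using P0_spd e0 unfolding sym_pos_def_def by blast
    also have "e \<bullet> (P0 *v e) = \<eta> 0 * (e \<bullet> (matrix_inv J0 *v e))"
      unfolding P0_J0 scaleR_mat_vec by simp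
    finally have a: "0 < \<eta> 0 * (e \<bullet> (matrix_inv J0 *v e))" .
    have "0 < e \<bullet> (matrix_inv J0 *v e)" using spd_inverse(1)[OF J0_spd] e0 unfolding sym_pos_def_def by blast
    then show ?thesis using a by (simp add: zero_less_mult_iff)
  qed
  have base: "Inv 0"
    unfolding Inv_def Og_def Ke_def using ss0_traj ss0_init P0_J0 J0_spd eta0
    by (auto simp: Phi_def)
  have step: "Inv (Suc t)" if IH: "Inv t" for t
  proof -
    obtain ss G where Ogt: "Og t = (ss, G)" by (cases "Og t")
    obtain s P where Kt: "Ke t = (s, P)" by (cases "Ke t")
    obtain J where G: "G = tensor_of_coord t J" and J: "sym_pos_def J" and P: "P = \<eta> t *\<^sub>R matrix_inv J"
      using IH unfolding Inv_def Ogt Kt by auto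
    have sstraj: "ss \<in> traj f u" and sst: "ss t = s" and eta: "\<eta> t > 0"
      using IH unfolding Inv_def Ogt Kt by (auto simp: Phi_def)
    define uu where "uu = u (Suc t)"
    define F where "F = jac (\<lambda>x. f x uu) s"
    define spred where "spred = f s uu"
    define yh where "yh = h spred uu"
    define H where "H = jac (\<lambda>x. h x uu) spred"
    define R where "R = covT lam T yh"
    define Ri where "Ri = matrix_inv R"
    define E where "E = T (y (Suc t)) - yh"
    define a' where "a' = \<alpha> (Suc t)"
    define \<eta>' where "\<eta>' = \<eta> (Suc t)"
    define Pp where "Pp = F ** P ** transpose F + a' *\<^sub>R (F ** P ** transpose F)"
    define Kg where "Kg = Pp ** transpose H ** matrix_inv (H ** Pp ** transpose H + R)"
    define Pn where "Pn = (mat 1 - Kg ** H) ** Pp"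
    define sn where "sn = spred + Kg *v E"
    have KS: "Ke (Suc t) = (sn, Pn)"
      using Kt unfolding Ke_def
      by (simp add: Let_def sn_def Pn_def Kg_def Pp_def E_def R_def H_def yh_def spred_def F_def uu_def a'_def)
    define Jc where "Jc = coord_tensor f u (Suc t) ss G"
    define Jfi where "Jfi = coord_tensor f u (Suc t) ss (fisher h u lam T (Suc t) ss)"
    define Jn where "Jn = (1 - \<gamma> (Suc t)) *\<^sub>R Jc + \<gamma> (Suc t) *\<^sub>R Jfi"
    define g where "g = coord_covec f u (Suc t) ss (score h u lam T (Suc t) (y (Suc t)) ss)"
    define \<theta>n where "\<theta>n = Phi (Suc t) ss + \<eta> (Suc t) *\<^sub>R (matrix_inv Jn *v g)"
    have OS: "Og (Suc t) = (Phi_inv f u (Suc t) \<theta>n, tensor_of_coord (Suc t) Jn)"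
      using Ogt unfolding Og_def
      by (simp add: Let_def \<theta>n_def Jn_def Jc_def Jfi_def g_def)
    have theta: "Phi (Suc t) ss = spred"
      using sstraj sst unfolding Phi_def traj_def spred_def uu_def by auto
    have dom: "yh \<in> mean_dom lam T" unfolding yh_def using h_dom by simp
    have Rs: "sym_pos_def R" unfolding R_def by (rule E.covT_spd[OF dom])
    have iR: "invertible R" by (rule spd_invertible[OF Rs])
    have Risym: "transpose Ri = Ri" unfolding Ri_def by (rule inv_sym[OF iR]) (use Rs in \<open>simp add: sym_pos_def_def\<close>)
    have RRi: "R *v (Ri *v z) = z" for z
      unfolding Ri_def using inv_props(1)[OF iR] by (simp add: matrix_vector_mul_assoc)
    have Fi: "invertible F" unfolding F_def uu_def by (rule F_invertible[of f u, OF diffeo_f])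
    have Jc: "Jc = transpose (matrix_inv F) ** J ** matrix_inv F"
      unfolding Jc_def G F_def uu_def sst[symmetric] by (rule coord_tensor_step[of f u, OF diffeo_f])
    have sc: "score h u lam T (Suc t) y0 ss v = (T y0 - yh) \<bullet> (Ri *v (H *v v (Suc t)))" for y0 v
      unfolding score_def theta Ri_def R_def H_def yh_def uu_def
      using score_deriv[OF expfam smooth_h, of spred "u (Suc t)" y0] dom unfolding yh_def uu_def by simp
    have Jfi: "Jfi = transpose H ** Ri ** H"
      unfolding Jfi_def
    proof (rule coord_tensor_eq[of f u, OF diffeo_f])
      fix v w :: "nat \<Rightarrow> real^'n"
      define a where "a = Ri *v (H *v v (Suc t))"
      define c where "c = Ri *v (H *v w (Suc t))"
      have fp: "frak_p h u lam T (Suc t) y0 ss = pobs lam T yh y0" for y0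
        unfolding frak_p_def theta yh_def uu_def ..
      have "fisher h u lam T (Suc t) ss v w = (\<integral>y0. ((T y0 - yh) \<bullet> a) * ((T y0 - yh) \<bullet> c) * pobs lam T yh y0 \<partial>lam)"
        unfolding fisher_def sc fp a_def c_def ..
      also have "\<dots> = a \<bullet> (R *v c)" unfolding R_def by (rule E.fisher_eq[OF dom])
      also have "\<dots> = (Ri *v (H *v v (Suc t))) \<bullet> (H *v w (Suc t))" unfolding a_def c_def RRi ..
      also have "\<dots> = (H *v v (Suc t)) \<bullet> (Ri *v (H *v w (Suc t)))"
        using transpose_inner[of Ri "H *v v (Suc t)" "H *v w (Suc t)"] Risym by simp
      also have "\<dots> = v (Suc t) \<bullet> (transpose H *v (Ri *v (H *v w (Suc t))))"
        by (rule transpose_inner)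
      also have "\<dots> = v (Suc t) \<bullet> ((transpose H ** Ri ** H) *v w (Suc t))"
        by (simp only: matrix_vector_mul_assoc matrix_mul_assoc)
      finally show "fisher h u lam T (Suc t) ss v w = v (Suc t) \<bullet> ((transpose H ** Ri ** H) *v w (Suc t))" .
    qed
    have g: "g = transpose H *v (Ri *v E)"
      unfolding g_def
    proof (rule coord_covec_eq[of f u, OF diffeo_f])
      fix v :: "nat \<Rightarrow> real^'n"
      have "score h u lam T (Suc t) (y (Suc t)) ss v = E \<bullet> (Ri *v (H *v v (Suc t)))"
        unfolding sc E_def ..
      also have "\<dots> = (Ri *v E) \<bullet> (H *v v (Suc t))"
        using inner_transpose[of E Ri "H *v v (Suc t)"] Risym by simp
      also have "\<dots> = (transpose H *v (Ri *v E)) \<bullet> v (Suc t)"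
        by (rule inner_transpose)
      finally show "score h u lam T (Suc t) (y (Suc t)) ss v = (transpose H *v (Ri *v E)) \<bullet> v (Suc t)" .
    qed
    have gam: "\<gamma> (Suc t) = \<eta>'" unfolding \<eta>'_def using gamma_eta by simp
    have eta': "1 / \<eta>' = (1 / (1 + a')) * (1 / \<eta> t) + 1"
      unfolding \<eta>'_def a'_def using eta_rec[rule_format, of "Suc t"] by simp
    have alpha: "a' \<ge> 0" unfolding a'_def using alpha_nonneg by simp
    have Jn: "Jn = (1 - \<eta>') *\<^sub>R (transpose (matrix_inv F) ** J ** matrix_inv F) + \<eta>' *\<^sub>R (transpose H ** matrix_inv R ** H)"
      unfolding Jn_def Jc Jfi gam Ri_def ..
    have PpE: "Pp = F ** (\<eta> t *\<^sub>R matrix_inv J) ** transpose F + a' *\<^sub>R (F ** (\<eta> t *\<^sub>R matrix_inv J) ** transpose F)"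
      unfolding Pp_def P ..
    have Jspd: "sym_pos_def Jn" unfolding Jn using ekf_step(1)[OF J Rs Fi eta alpha eta', of H] .
    have Pn: "Pn = \<eta>' *\<^sub>R matrix_inv Jn" unfolding Jn Pn_def Kg_def PpE using ekf_step(2)[OF J Rs Fi eta alpha eta', of H] .
    have KE: "Kg *v E = \<eta>' *\<^sub>R (matrix_inv Jn *v (transpose H *v (matrix_inv R *v E)))"
      unfolding Jn Kg_def PpE using ekf_step(3)[OF J Rs Fi eta alpha eta', of H E] .
    have etap: "\<eta>' > 0" using ekf_step(4)[OF J Rs Fi eta alpha eta'] .
    have thn: "\<theta>n = sn" unfolding \<theta>n_def sn_def theta g KE Ri_def \<eta>'_def ..
    show "Inv (Suc t)"
      unfolding Inv_def OS KS
      using Phi_inv_props[of f u, OF diffeo_f, of "Suc t" \<theta>n] thn Jspd Pn etap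
      unfolding \<eta>'_def by auto
  qed
  have all: "Inv t" for t by (induction t) (use base step in auto)
  show ?thesis
  proof
    fix t
    obtain J where G: "snd (Og t) = tensor_of_coord t J" and P: "snd (Ke t) = \<eta> t *\<^sub>R matrix_inv J"
      and Ph: "Phi t (fst (Og t)) = fst (Ke t)"
      using all[of t] unfolding Inv_def by auto
    have "coord_tensor f u t (fst (Og t)) (snd (Og t)) = J"
      unfolding G by (rule coord_tensor_same[of f u, OF diffeo_f])
    then show "Phi t (fst (ongd f h u lam T y \<eta> \<gamma> ss0 J0 t)) = fst (ekf f h u lam T y \<alpha> s0 P0 t)
            \<and> snd (ekf f h u lam T y \<alpha> s0 P0 t)
                = \<eta> t *\<^sub>R matrix_inv (coord_tensor f u t (fst (ongd f h u lam T y \<eta> \<gamma> ss0 J0 t))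
                                        (snd (ongd f h u lam T y \<eta> \<gamma> ss0 J0 t)))"
      using Ph P unfolding Og_def Ke_def by simp
  qed
qed

end
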